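(* Let $K$ be a field of characteristic $0$, $n\ge2$, and let $f\in K[[x_1,\dots,x_n]]$ be D-finite over $K(x_1,\dots,x_n)$. For each $i$ fix a non-zero $L_i\in K[x_1,\dots,x_n]\langle D_{x_i}\rangle$ with $L_i(f)=0$, of order $r_i$ and degree $d_i$; let $r_f=\max_ir_i$ and $d_f=\max_id_i$. Let $T=x_1D_{x_1}-x_2D_{x_2}$ and $D_{x_1,x_2}=D_{x_1}D_{x_2}$ in the Weyl algebra. Then there exists a non-zero operator $P$ with $P(f)=0$ lying in the subalgebra $K[x_3,\dots,x_n][x_1x_2]\langle T,D_{x_1,x_2}\rangle$, such that, writing $P=\sum c_{i,j,\ell}(x_3,\dots,x_n)(x_1x_2)^iT^jD_{x_1,x_2}^\ell$ with $c_{i,j,\ell}\in K[x_3,\dots,x_n]$, $P$ has degree $O(d_f^2r_f^2)$ in $x_1x_2$, total degree $O(d_f^9r_f^8)$ in $x_3,\dots,x_n$, and total degree $O(d_f^2r_f^2)$ in $T,D_{x_1,x_2}$; and for each $h\in\{3,\dots,n\}$ there exists a non-zero operator $Q_h$ with $Q_h(f)=0$ lying in $K[x_3,\dots,x_n][x_1x_2]\langle T,D_{x_h}\rangle$, of degree $O(d_f^2r_f^3)$ in $x_1x_2$, total degree $O(d_f^9r_f^{12})$ in $x_3,\dots,x_n$, and total degree $O(d_f^2r_f^3)$ in $T,D_{x_h}$.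
   Context: A series $g\in K[[x_1,\dots,x_n]]$ is D-finite over $K(x_1,\dots,x_n)$ if the $K(x_1,\dots,x_n)$-vector space spanned by all its partial derivatives in $K(x_1,\dots,x_n)\otimes_{K[x_1,\dots,x_n]}K[[x_1,\dots,x_n]]$ is finite-dimensional. The Weyl algebra $W_n=K[x_1,\dots,x_n]\langle D_{x_1},\dots,D_{x_n}\rangle$ has $D_{x_i}a=aD_{x_i}+\partial a/\partial x_i$. For $L=\sum_{j=0}^r\ell_jD_{x_i}^j$ with $\ell_r\ne0$, order is $r$ and degree is the maximal total degree of the $\ell_j$. The subalgebra $K[x_3,\dots,x_n][x_1x_2]\langle T,D_{x_1,x_2}\rangle$ is the $K$-subalgebra of $W_n$ generated by $x_1x_2,x_3,\dots,x_n,T,D_{x_1,x_2}$; its elements $(x_1x_2)^ix_3^{k_3}\cdots x_n^{k_n}T^jD_{x_1,x_2}^\ell$ form a $K$-basis, which gives the degree notions used (similarly for $T,D_{x_h}$). The $O(\cdot)$ bounds are as functions of $d_f$ and $r_f$. *)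

theory Defs
  imports Main
begin

text \<open>Variables x_1,...,x_n are indexed 0,...,n-1.  A monomial / exponent vector is a
function nat => nat vanishing at indices >= n.  A power series in K[[x_1..x_n]] is its
coefficient function on exponent vectors (normalised to vanish on non-exponent vectors);
a polynomial is a power series with finite support.\<close>

definition expvecs :: "nat \<Rightarrow> (nat \<Rightarrow> nat) set" where
  "expvecs n = {m. \<forall>v\<ge>n. m v = 0}"

definition is_series :: "nat \<Rightarrow> ((nat \<Rightarrow> nat) \<Rightarrow> 'a::zero) \<Rightarrow> bool" where
  "is_series n g \<longleftrightarrow> (\<forall>m. m \<notin> expvecs n \<longrightarrow> g m = 0)"

definition is_poly :: "nat \<Rightarrow> ((nat \<Rightarrow> nat) \<Rightarrow> 'a::zero) \<Rightarrow> bool" where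
  "is_poly n p \<longleftrightarrow> is_series n p \<and> finite {m. p m \<noteq> 0}"

definition mdeg :: "nat \<Rightarrow> (nat \<Rightarrow> nat) \<Rightarrow> nat" where
  "mdeg n m = (\<Sum>v<n. m v)"

definition tdeg :: "nat \<Rightarrow> ((nat \<Rightarrow> nat) \<Rightarrow> 'a::zero) \<Rightarrow> nat" where
  "tdeg n p = Max ({mdeg n m | m. p m \<noteq> 0} \<union> {0})"

definition dvar :: "nat \<Rightarrow> ((nat \<Rightarrow> nat) \<Rightarrow> 'a::semiring_1) \<Rightarrow> (nat \<Rightarrow> nat) \<Rightarrow> 'a" where
  "dvar v g = (\<lambda>m. of_nat (m v + 1) * g (m(v := m v + 1)))"

definition xvar :: "nat \<Rightarrow> ((nat \<Rightarrow> nat) \<Rightarrow> 'a::zero) \<Rightarrow> (nat \<Rightarrow> nat) \<Rightarrow> 'a" where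
  "xvar v g = (\<lambda>m. if m v = 0 then 0 else g (m(v := m v - 1)))"

definition xmon :: "(nat \<Rightarrow> nat) \<Rightarrow> ((nat \<Rightarrow> nat) \<Rightarrow> 'a::zero) \<Rightarrow> (nat \<Rightarrow> nat) \<Rightarrow> 'a" where
  "xmon k g = (\<lambda>m. if k \<le> m then g (\<lambda>v. m v - k v) else 0)"

definition pmult :: "((nat \<Rightarrow> nat) \<Rightarrow> 'a::semiring_1) \<Rightarrow> ((nat \<Rightarrow> nat) \<Rightarrow> 'a) \<Rightarrow> (nat \<Rightarrow> nat) \<Rightarrow> 'a" where
  "pmult p g = (\<lambda>m. \<Sum>a\<in>{a. a \<le> m}. p a * g (\<lambda>v. m v - a v))"

fun pder :: "nat \<Rightarrow> (nat \<Rightarrow> nat) \<Rightarrow> ((nat \<Rightarrow> nat) \<Rightarrow> 'a::semiring_1) \<Rightarrow> (nat \<Rightarrow> nat) \<Rightarrow> 'a" where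
  "pder 0 \<beta> g = g"
| "pder (Suc k) \<beta> g = (dvar k ^^ \<beta> k) (pder k \<beta> g)"

text \<open>D-finiteness: the K(x)-span of all partial derivatives of f in
K(x) \<otimes> K[[x]] is finite-dimensional, i.e. there is N such that any N+1 partial
derivatives are linearly dependent over K(x), equivalently (clearing denominators,
K[[x]] being a domain) over K[x].\<close>
definition dfinite :: "nat \<Rightarrow> ((nat \<Rightarrow> nat) \<Rightarrow> 'a::field) \<Rightarrow> bool" where
  "dfinite n f \<longleftrightarrow> (\<exists>N. \<forall>\<beta> :: nat \<Rightarrow> (nat \<Rightarrow> nat). (\<forall>k\<le>N. \<beta> k \<in> expvecs n) \<longrightarrow>
     (\<exists>p. (\<forall>k\<le>N. is_poly n (p k)) \<and> (\<exists>k\<le>N. p k \<noteq> (\<lambda>_. 0)) \<and>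
          (\<forall>m\<in>expvecs n. (\<Sum>k\<le>N. pmult (p k) (pder n (\<beta> k) f) m) = 0)))"

text \<open>An operator L = sum_j l_j D_{x_i}^j in K[x]<D_{x_i}> is given by its coefficient
polynomials l :: nat => poly.\<close>
definition ore_op :: "nat \<Rightarrow> (nat \<Rightarrow> (nat \<Rightarrow> nat) \<Rightarrow> 'a::zero) \<Rightarrow> bool" where
  "ore_op n l \<longleftrightarrow> finite {j. l j \<noteq> (\<lambda>_. 0)} \<and> (\<forall>j. is_poly n (l j))"

definition op_order :: "(nat \<Rightarrow> (nat \<Rightarrow> nat) \<Rightarrow> 'a::zero) \<Rightarrow> nat" where
  "op_order l = Max ({j. l j \<noteq> (\<lambda>_. 0)} \<union> {0})"

definition op_degree :: "nat \<Rightarrow> (nat \<Rightarrow> (nat \<Rightarrow> nat) \<Rightarrow> 'a::zero) \<Rightarrow> nat" where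
  "op_degree n l = Max ({tdeg n (l j) | j. l j \<noteq> (\<lambda>_. 0)} \<union> {0})"

definition apply_ore :: "nat \<Rightarrow> (nat \<Rightarrow> (nat \<Rightarrow> nat) \<Rightarrow> 'a::semiring_1) \<Rightarrow>
    ((nat \<Rightarrow> nat) \<Rightarrow> 'a) \<Rightarrow> (nat \<Rightarrow> nat) \<Rightarrow> 'a" where
  "apply_ore i l g = (\<lambda>m. \<Sum>j\<in>{j. l j \<noteq> (\<lambda>_. 0)}. pmult (l j) ((dvar i ^^ j) g) m)"

definition Top :: "((nat \<Rightarrow> nat) \<Rightarrow> 'a::ring_1) \<Rightarrow> (nat \<Rightarrow> nat) \<Rightarrow> 'a" where
  "Top g = (\<lambda>m. xvar 0 (dvar 0 g) m - xvar 1 (dvar 1 g) m)"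

definition D12 :: "((nat \<Rightarrow> nat) \<Rightarrow> 'a::semiring_1) \<Rightarrow> (nat \<Rightarrow> nat) \<Rightarrow> 'a" where
  "D12 g = dvar 0 (dvar 1 g)"

text \<open>Elements of K[x_3..x_n][x_1x_2]<T, D> (D = D_{x_1,x_2} or D_{x_h}) are given by
their coordinates c(i,k,j,l) in the basis (x_1x_2)^i x^k T^j D^l, where k is an exponent
vector in x_3..x_n (indices 2..n-1).\<close>
definition basis_act :: "(((nat \<Rightarrow> nat) \<Rightarrow> 'a::ring_1) \<Rightarrow> (nat \<Rightarrow> nat) \<Rightarrow> 'a) \<Rightarrow>
    nat \<times> (nat \<Rightarrow> nat) \<times> nat \<times> nat \<Rightarrow> ((nat \<Rightarrow> nat) \<Rightarrow> 'a) \<Rightarrow> (nat \<Rightarrow> nat) \<Rightarrow> 'a" where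
  "basis_act D t g = (case t of (i, k, j, l) \<Rightarrow>
      ((xvar 0 \<circ> xvar 1) ^^ i) (xmon k ((Top ^^ j) ((D ^^ l) g))))"

definition sub_coeffs :: "nat \<Rightarrow> (nat \<times> (nat \<Rightarrow> nat) \<times> nat \<times> nat \<Rightarrow> 'a::zero) \<Rightarrow> bool" where
  "sub_coeffs n c \<longleftrightarrow> finite {t. c t \<noteq> 0} \<and>
     (\<forall>i k j l. c (i, k, j, l) \<noteq> 0 \<longrightarrow> k \<in> expvecs n \<and> k 0 = 0 \<and> k 1 = 0)"

definition sub_apply :: "(((nat \<Rightarrow> nat) \<Rightarrow> 'a::ring_1) \<Rightarrow> (nat \<Rightarrow> nat) \<Rightarrow> 'a) \<Rightarrow>
    (nat \<times> (nat \<Rightarrow> nat) \<times> nat \<times> nat \<Rightarrow> 'a) \<Rightarrow> ((nat \<Rightarrow> nat) \<Rightarrow> 'a) \<Rightarrow> (nat \<Rightarrow> nat) \<Rightarrow> 'a" where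
  "sub_apply D c g = (\<lambda>m. \<Sum>t\<in>{t. c t \<noteq> 0}. c t * basis_act D t g m)"

definition sub_bounds :: "nat \<Rightarrow> (nat \<times> (nat \<Rightarrow> nat) \<times> nat \<times> nat \<Rightarrow> 'a::zero) \<Rightarrow>
    nat \<Rightarrow> nat \<Rightarrow> nat \<Rightarrow> bool" where
  "sub_bounds n c B1 B2 B3 \<longleftrightarrow>
     (\<forall>i k j l. c (i, k, j, l) \<noteq> 0 \<longrightarrow> i \<le> B1 \<and> mdeg n k \<le> B2 \<and> j + l \<le> B3)"

end

theory Submission
  imports Defs "HOL-Library.Function_Algebras" "HOL-Library.FuncSet" Complex_Main
begin

definition sc :: "'a::field \<Rightarrow> ('b \<Rightarrow> 'a) \<Rightarrow> ('b \<Rightarrow> 'a)" where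
  "sc c g = (\<lambda>m. c * g m)"

interpretation fs: vector_space "sc :: 'a::field \<Rightarrow> ('b \<Rightarrow> 'a) \<Rightarrow> ('b \<Rightarrow> 'a)"
  by unfold_locales (auto simp: sc_def fun_eq_iff algebra_simps)

definition uv :: "nat \<Rightarrow> nat \<Rightarrow> nat" where "uv v = (\<lambda>u. if u = v then 1 else 0)"

lemma xmon_xmon: "xmon a (xmon b g) = xmon (a + b) g"
proof (rule ext)
  fix m :: "nat \<Rightarrow> nat"
  show "xmon a (xmon b g) m = xmon (a + b) g m"
  proof (cases "a + b \<le> m")
    case True
    then have "\<forall>v. a v + b v \<le> m v" by (simp add: le_fun_def)
    then have "a \<le> m" "b \<le> (\<lambda>v. m v - a v)" unfolding le_fun_def by (auto dest: add_leD1) (metis add.commute le_diff_conv2 add_leD2 le_add2)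
    moreover have "(\<lambda>v. (m v - a v) - b v) = (\<lambda>v. m v - (a + b) v)" by auto
    ultimately show ?thesis using True by (simp add: xmon_def)
  next
    case False
    then have "\<not> (a \<le> m \<and> b \<le> (\<lambda>v. m v - a v))"
      unfolding le_fun_def plus_fun_def by (metis le_diff_conv2 add.commute)
    then show ?thesis using False by (auto simp: xmon_def)
  qed
qed

lemma xmon_0: "xmon 0 g = g"
  by (simp add: xmon_def fun_eq_iff le_fun_def)

lemma xmon_0': "xmon (\<lambda>_. 0) g = g"
  by (simp add: xmon_def fun_eq_iff le_fun_def)

lemma xvar_xmon: "xvar v = xmon (uv v)"
proof (intro ext)
  fix g :: "(nat \<Rightarrow> nat) \<Rightarrow> 'a" and m
  have "(uv v \<le> m) = (m v \<noteq> 0)" by (auto simp: uv_def le_fun_def)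
  moreover have "(\<lambda>va. m va - uv v va) = m(v := m v - 1)" by (auto simp: uv_def)
  ultimately show "xvar v g m = xmon (uv v) g m" by (simp add: xvar_def xmon_def)
qed

lemma dvar_xmon:
  "dvar j (xmon a g) = xmon a (dvar j g) + sc (of_nat (a j)) (xmon (a(j := a j - 1)) g)"
proof (rule ext)
  fix m :: "nat \<Rightarrow> nat"
  define m' where "m' = m(j := m j + 1)"
  define a' where "a' = a(j := a j - 1)"
  have L: "dvar j (xmon a g) m = of_nat (m j + 1) * (if a \<le> m' then g (\<lambda>v. m' v - a v) else 0)"
    by (simp add: dvar_def xmon_def m'_def)
  have M: "xmon a (dvar j g) m = (if a \<le> m then of_nat (m j - a j + 1) * g ((\<lambda>v. m v - a v)(j := m j - a j + 1)) else 0)"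
    by (simp add: dvar_def xmon_def)
  have R: "sc (of_nat (a j)) (xmon a' g) m = of_nat (a j) * (if a' \<le> m then g (\<lambda>v. m v - a' v) else 0)"
    by (simp add: sc_def xmon_def)
  have ptw: "\<And>x y :: nat \<Rightarrow> nat. x \<le> y \<longleftrightarrow> (\<forall>v. x v \<le> y v)" by (simp add: le_fun_def)
  show "dvar j (xmon a g) m = (xmon a (dvar j g) + sc (of_nat (a j)) (xmon (a(j := a j - 1)) g)) m"
  proof (cases "a \<le> m")
    case True
    then have am: "\<forall>v. a v \<le> m v" by (simp add: ptw)
    then have le1: "a \<le> m'" unfolding ptw m'_def by (metis fun_upd_apply le_SucI Suc_eq_plus1)
    have e1: "(\<lambda>v. m' v - a v) = (\<lambda>v. m v - a v)(j := m j - a j + 1)"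
      using am by (auto simp: fun_eq_iff m'_def Suc_diff_le)
    have le2: "a' \<le> m" unfolding ptw a'_def using am by (metis fun_upd_apply diff_le_self le_trans)
    have e2: "a j \<noteq> 0 \<Longrightarrow> (\<lambda>v. m v - a' v) = (\<lambda>v. m' v - a v)"
      using am by (auto simp: fun_eq_iff m'_def a'_def)
    have c: "(of_nat (m j + 1) :: 'a) = of_nat (m j - a j + 1) + of_nat (a j)"
      using am by (metis of_nat_add add.commute add.left_commute le_add_diff_inverse)
    show ?thesis
    proof (cases "a j = 0")
      case True
      then show ?thesis using L M R True le1 e1 \<open>a \<le> m\<close> c by (simp add: a'_def)
    next
      case False
      then show ?thesis unfolding a'_def[symmetric] using L M R le1 e1 le2 e2 \<open>a \<le> m\<close> c
        by (simp add: distrib_right)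
    qed
  next
    case False
    then obtain u where u: "\<not> a u \<le> m u" by (auto simp: ptw)
    show ?thesis
    proof (cases "a \<le> m'")
      case True
      then have am': "\<forall>v. a v \<le> m' v" by (simp add: ptw)
      have uj: "u = j" using am' u unfolding m'_def by (metis fun_upd_other)
      have aj: "a j = m j + 1" using am'[rule_format, of j] u uj by (simp add: m'_def)
      have le2: "a' \<le> m" unfolding ptw a'_def using am' aj
        by (metis fun_upd_apply fun_upd_other m'_def diff_add_inverse2 order_refl)
      have e2: "(\<lambda>v. m v - a' v) = (\<lambda>v. m' v - a v)"
        using aj by (auto simp: fun_eq_iff m'_def a'_def)
      show ?thesis unfolding a'_def[symmetric] using L M R False True le2 e2 aj by simp
    next
      case False
      have "\<not> a' \<le> m"
      proof
        assume "a' \<le> m"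
        then have "\<forall>v. a' v \<le> m v" by (simp add: ptw)
        then have "\<forall>v. a v \<le> m' v" unfolding a'_def m'_def
          by (metis fun_upd_apply le_diff_conv Suc_eq_plus1 add.commute le_SucI)
        then show False using False by (simp add: ptw)
      qed
      then show ?thesis unfolding a'_def[symmetric] using L M R False \<open>\<not> a \<le> m\<close> by simp
    qed
  qed
qed

lemma dvar_comm: "dvar i (dvar j g) = dvar j (dvar i (g :: (nat \<Rightarrow> nat) \<Rightarrow> 'a::comm_semiring_1))"
proof (cases "i = j")
  case False
  show ?thesis
  proof (rule ext)
    fix m :: "nat \<Rightarrow> nat"
    have "m(i := Suc (m i), j := Suc (m j)) = m(j := Suc (m j), i := Suc (m i))"
      using False by (rule fun_upd_twist)
    then show "dvar i (dvar j g) m = dvar j (dvar i g) m"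
      using False by (simp add: dvar_def) (rule mult.left_commute)
  qed
qed simp

lemma dvar_funpow_comm: "dvar i ((dvar j ^^ p) g) = (dvar j ^^ p) (dvar i (g :: (nat \<Rightarrow> nat) \<Rightarrow> 'a::comm_semiring_1))"
proof (induction p)
  case 0 then show ?case by simp
next
  case (Suc p)
  have "dvar i (dvar j ((dvar j ^^ p) g)) = dvar j (dvar i ((dvar j ^^ p) g))" by (rule dvar_comm)
  then show ?case by (simp add: Suc.IH)
qed

lemma pder_cong: "(\<And>v. v < k \<Longrightarrow> \<delta> v = \<delta>' v) \<Longrightarrow> pder k \<delta> g = pder k \<delta>' g"
  by (induction k) auto

lemma dvar_pder: "i < k \<Longrightarrow> dvar i (pder k \<delta> g) = pder k (\<delta>(i := \<delta> i + 1)) (g :: (nat \<Rightarrow> nat) \<Rightarrow> 'a::comm_semiring_1)"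
proof (induction k)
  case 0 then show ?case by simp
next
  case (Suc k)
  show ?case
  proof (cases "i = k")
    case True
    have e: "pder k (\<delta>(i := \<delta> i + 1)) g = pder k \<delta> g" using True by (intro pder_cong) auto
    have "dvar i (pder (Suc k) \<delta> g) = (dvar k ^^ Suc (\<delta> k)) (pder k \<delta> g)"
      using True by (simp add: funpow_swap1)
    also have "\<dots> = pder (Suc k) (\<delta>(i := \<delta> i + 1)) g"
      using True e by simp
    finally show ?thesis .
  next
    case False
    then have "i < k" using Suc by simp
    then show ?thesis using Suc False by (simp add: dvar_funpow_comm)
  qed
qed

lemma pder_zero: "pder k (\<lambda>_. 0) g = g"
  by (induction k) auto

lemma fun_sum_apply: "(\<Sum>x\<in>A. f x) m = (\<Sum>x\<in>A. f x m)"
  by (induction A rule: infinite_finite_induct) auto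

lemma sc_apply: "sc c g m = c * g m" by (simp add: sc_def)

lemma sc_0[simp]: "sc 0 g = 0" by (simp add: sc_def fun_eq_iff)


definition lin :: "(((nat \<Rightarrow> nat) \<Rightarrow> 'a::field) \<Rightarrow> ((nat \<Rightarrow> nat) \<Rightarrow> 'a)) \<Rightarrow> bool" where
  "lin \<phi> \<longleftrightarrow> (\<forall>x y. \<phi> (x + y) = \<phi> x + \<phi> y) \<and> (\<forall>c x. \<phi> (sc c x) = sc c (\<phi> x))"

lemma linI: "(\<And>x y. \<phi> (x + y) = \<phi> x + \<phi> y) \<Longrightarrow> (\<And>c x. \<phi> (sc c x) = sc c (\<phi> x)) \<Longrightarrow> lin \<phi>"
  by (simp add: lin_def)

lemma lin_add: "lin \<phi> \<Longrightarrow> \<phi> (x + y) = \<phi> x + \<phi> y" by (simp add: lin_def)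
lemma lin_sc: "lin \<phi> \<Longrightarrow> \<phi> (sc c x) = sc c (\<phi> x)" by (simp add: lin_def)

lemma lin_zero: "lin \<phi> \<Longrightarrow> \<phi> 0 = 0"
  using lin_sc[of \<phi> 0 0] by simp

lemma lin_sum: "lin \<phi> \<Longrightarrow> \<phi> (\<Sum>x\<in>A. g x) = (\<Sum>x\<in>A. \<phi> (g x))"
  by (induction A rule: infinite_finite_induct) (auto simp: lin_zero lin_add)

lemma sc_minus1: "sc (-1) x = - x" by (simp add: sc_def fun_eq_iff)

lemma lin_diff: "lin \<phi> \<Longrightarrow> \<phi> (x - y) = \<phi> x - \<phi> y"
proof -
  assume l: "lin \<phi>"
  have "\<phi> (x - y) = \<phi> (x + sc (-1) y)" by (simp add: sc_minus1)
  also have "\<dots> = \<phi> x + sc (-1) (\<phi> y)" by (simp only: lin_add[OF l] lin_sc[OF l])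
  also have "\<dots> = \<phi> x - \<phi> y" by (simp add: sc_minus1)
  finally show ?thesis .
qed

lemma lin_span:
  assumes "lin \<phi>" "\<And>s. s \<in> S \<Longrightarrow> \<phi> s \<in> fs.span T" "x \<in> fs.span S"
  shows "\<phi> x \<in> fs.span T"
  using assms(3)
proof (induction rule: fs.span_induct_alt)
  case base then show ?case by (simp only: lin_zero[OF assms(1)] fs.span_zero)
next
  case (step c x y)
  have "\<phi> (sc c x + y) = sc c (\<phi> x) + \<phi> y" by (simp only: lin_add[OF assms(1)] lin_sc[OF assms(1)])
  then show ?case using step assms(2) by (metis fs.span_add fs.span_scale)
qed

lemma lin_comp: "lin \<phi> \<Longrightarrow> lin \<psi> \<Longrightarrow> lin (\<lambda>g. \<phi> (\<psi> g))"
  by (simp add: lin_def)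

lemma lin_id: "lin (\<lambda>g. g)" by (simp add: lin_def)

lemma lin_funpow: "lin \<phi> \<Longrightarrow> lin (\<phi> ^^ k)"
  by (induction k) (auto simp: lin_def)

lemma lin_xmon: "lin (xmon a)"
  by (rule linI) (auto simp: xmon_def fun_eq_iff sc_def)

lemma lin_dvar: "lin (dvar j)"
  by (rule linI) (auto simp: dvar_def fun_eq_iff sc_def algebra_simps)

lemma lin_minus: "lin \<phi> \<Longrightarrow> lin \<psi> \<Longrightarrow> lin (\<lambda>g. \<phi> g - \<psi> g)"
proof (rule linI)
  fix x y assume "lin \<phi>" "lin \<psi>"
  then show "\<phi> (x + y) - \<psi> (x + y) = (\<phi> x - \<psi> x) + (\<phi> y - \<psi> y)"
    by (simp only: lin_add) (simp add: fun_eq_iff algebra_simps)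
next
  fix c x assume "lin \<phi>" "lin \<psi>"
  then have "\<phi> (sc c x) - \<psi> (sc c x) = sc c (\<phi> x) - sc c (\<psi> x)" by (simp add: lin_sc)
  also have "\<dots> = sc c (\<phi> x - \<psi> x)" by (simp add: sc_def fun_eq_iff algebra_simps)
  finally show "\<phi> (sc c x) - \<psi> (sc c x) = sc c (\<phi> x - \<psi> x)" .
qed

definition mulp :: "((nat \<Rightarrow> nat) \<Rightarrow> 'a::field) \<Rightarrow> ((nat \<Rightarrow> nat) \<Rightarrow> 'a) \<Rightarrow> (nat \<Rightarrow> nat) \<Rightarrow> 'a" where
  "mulp p g = (\<lambda>m. \<Sum>a\<in>{a. p a \<noteq> 0}. p a * xmon a g m)"

lemma mulp_sum: "mulp p g = (\<Sum>a\<in>{a. p a \<noteq> 0}. sc (p a) (xmon a g))"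
  by (simp add: mulp_def fun_eq_iff fun_sum_apply sc_apply)

lemma lin_mulp: "lin (mulp p)"
proof (rule linI)
  fix x y
  show "mulp p (x + y) = mulp p x + mulp p y"
    by (simp add: mulp_sum lin_add[OF lin_xmon] fs.scale_right_distrib sum.distrib)
next
  fix c x
  have "mulp p (sc c x) = (\<Sum>a\<in>{a. p a \<noteq> 0}. sc c (sc (p a) (xmon a x)))"
    by (simp add: mulp_sum lin_sc[OF lin_xmon] mult.commute)
  then show "mulp p (sc c x) = sc c (mulp p x)"
    by (simp add: mulp_sum fs.scale_sum_right)
qed

lemma Top_eq: "Top g = xmon (uv 0) (dvar 0 g) - xmon (uv 1) (dvar 1 g)"
  by (simp add: Top_def xvar_xmon fun_eq_iff)

lemma lin_Top: "lin (Top :: ((nat \<Rightarrow> nat) \<Rightarrow> 'a::field) \<Rightarrow> _)"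
proof -
  have "lin (\<lambda>g::(nat \<Rightarrow> nat) \<Rightarrow> 'a. xmon (uv 0) (dvar 0 g) - xmon (uv 1) (dvar 1 g))"
    by (rule lin_minus[OF lin_comp[OF lin_xmon lin_dvar] lin_comp[OF lin_xmon lin_dvar]])
  then show ?thesis by (simp add: Top_eq[abs_def])
qed

lemma lin_D12: "lin (D12 :: ((nat \<Rightarrow> nat) \<Rightarrow> 'a::field) \<Rightarrow> _)"
proof -
  have "lin (\<lambda>g::(nat \<Rightarrow> nat) \<Rightarrow> 'a. dvar 0 (dvar 1 g))" by (rule lin_comp[OF lin_dvar lin_dvar])
  moreover have "D12 = (\<lambda>g::(nat \<Rightarrow> nat) \<Rightarrow> 'a. dvar 0 (dvar 1 g))" by (simp add: D12_def fun_eq_iff)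
  ultimately show ?thesis by simp
qed

lemma xmon_mulp: "xmon a (mulp p g) = mulp p (xmon a g)"
proof -
  have "xmon a (mulp p g) = (\<Sum>b\<in>{b. p b \<noteq> 0}. sc (p b) (xmon a (xmon b g)))"
    by (simp add: mulp_sum lin_sum[OF lin_xmon] lin_sc[OF lin_xmon])
  also have "\<dots> = mulp p (xmon a g)"
    by (simp add: mulp_sum xmon_xmon add.commute)
  finally show ?thesis .
qed

lemma mulp_mulp: "mulp p (mulp q g) = mulp q (mulp p g)"
proof -
  have "mulp p (mulp q g) = (\<Sum>b\<in>{b. q b \<noteq> 0}. \<Sum>a\<in>{a. p a \<noteq> 0}. sc (q b * p a) (xmon (a + b) g))"
    by (simp add: mulp_sum[of q] lin_sum[OF lin_mulp] lin_sc[OF lin_mulp] mulp_sum[of p] xmon_xmon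
        fs.scale_sum_right)
  also have "\<dots> = (\<Sum>a\<in>{a. p a \<noteq> 0}. \<Sum>b\<in>{b. q b \<noteq> 0}. sc (p a * q b) (xmon (b + a) g))"
    by (subst sum.swap) (simp add: mult.commute add.commute)
  also have "\<dots> = mulp q (mulp p g)"
    by (simp add: mulp_sum[of p] lin_sum[OF lin_mulp] lin_sc[OF lin_mulp] mulp_sum[of q] xmon_xmon
        fs.scale_sum_right)
  finally show ?thesis .
qed


definition wt :: "nat \<Rightarrow> nat \<Rightarrow> (nat \<Rightarrow> nat) \<Rightarrow> nat" where
  "wt W k a = (\<Sum>v<k. a v * W ^ v)"

lemma wt_less: "(\<And>v. v < k \<Longrightarrow> a v < W) \<Longrightarrow> wt W k a < W ^ k"
proof (induction k)
  case 0 then show ?case by (simp add: wt_def)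
next
  case (Suc k)
  have "wt W (Suc k) a = wt W k a + a k * W ^ k" by (simp add: wt_def)
  also have "\<dots> < W ^ k + a k * W ^ k" using Suc by simp
  also have "\<dots> = (a k + 1) * W ^ k" by simp
  also have "\<dots> \<le> W * W ^ k" using Suc.prems[of k] by (intro mult_right_mono) auto
  finally show ?case by simp
qed

lemma wt_inj:
  "(\<And>v. v < k \<Longrightarrow> a v < W) \<Longrightarrow> (\<And>v. v < k \<Longrightarrow> b v < W) \<Longrightarrow> wt W k a = wt W k b
   \<Longrightarrow> v < k \<Longrightarrow> a v = b v"
proof (induction k arbitrary: v)
  case 0 then show ?case by simp
next
  case (Suc k)
  have la: "wt W k a < W ^ k" and lb: "wt W k b < W ^ k" using Suc.prems by (auto intro: wt_less)
  have eq: "a k * W ^ k + wt W k a = b k * W ^ k + wt W k b" using Suc.prems(3) by (simp add: wt_def)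
  have "W ^ k \<noteq> 0" using la by (metis less_nat_zero_code)
  then have Wk: "W ^ k > 0" by simp
  have "(a k * W ^ k + wt W k a) div W ^ k = a k" using la Wk by simp
  moreover have "(b k * W ^ k + wt W k b) div W ^ k = b k" using lb Wk by simp
  ultimately have ak: "a k = b k" using eq by simp
  then have "wt W k a = wt W k b" using eq by simp
  then show ?case using Suc ak by (cases "v = k") auto
qed

lemma wt_add: "wt W k (a + b) = wt W k a + wt W k b"
  by (simp add: wt_def sum.distrib algebra_simps)

lemma mdeg_add: "mdeg n (a + b) = mdeg n a + mdeg n b"
  by (simp add: mdeg_def sum.distrib)

lemma expvecs_le:
  assumes "m \<in> expvecs n" "a \<le> m" shows "a \<in> expvecs n"
  unfolding expvecs_def mem_Collect_eq
proof (intro allI impI)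
  fix v assume "n \<le> v"
  then have "m v = 0" using assms(1) by (simp add: expvecs_def)
  then show "a v = 0" using le_funD[OF assms(2), of v] by simp
qed

lemma le_mdeg: "a \<in> expvecs n \<Longrightarrow> a v \<le> mdeg n a"
proof (cases "v < n")
  case True
  assume "a \<in> expvecs n"
  show ?thesis unfolding mdeg_def using True by (intro member_le_sum) auto
qed (auto simp: expvecs_def)

lemma finite_expvecs_bounded: "finite {a \<in> expvecs n. mdeg n a \<le> D}"
proof -
  have "{a \<in> expvecs n. mdeg n a \<le> D} \<subseteq> {f. \<forall>x. (x \<in> {..<n} \<longrightarrow> f x \<in> {..D}) \<and> (x \<notin> {..<n} \<longrightarrow> f x = 0)}"
  proof
    fix a assume a: "a \<in> {a \<in> expvecs n. mdeg n a \<le> D}"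
    have "a x \<in> {..D}" for x using le_mdeg[of a n x] a by auto
    moreover have "x \<notin> {..<n} \<Longrightarrow> a x = 0" for x using a by (auto simp: expvecs_def)
    ultimately show "a \<in> {f. \<forall>x. (x \<in> {..<n} \<longrightarrow> f x \<in> {..D}) \<and> (x \<notin> {..<n} \<longrightarrow> f x = 0)}" by blast
  qed
  moreover have "finite {f. \<forall>x. (x \<in> {..<n} \<longrightarrow> f x \<in> {..D}) \<and> (x \<notin> {..<n} \<longrightarrow> f x = (0::nat))}"
    by (intro finite_set_of_finite_funs) auto
  ultimately show ?thesis by (rule finite_subset)
qed

lemma finite_le_expvec: "m \<in> expvecs n \<Longrightarrow> finite {a. a \<le> m}"
proof -
  assume m: "m \<in> expvecs n"
  have "{a. a \<le> m} \<subseteq> {a \<in> expvecs n. mdeg n a \<le> mdeg n m}"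
  proof
    fix a assume "a \<in> {a. a \<le> m}"
    then have am: "a \<le> m" by simp
    have "mdeg n a \<le> mdeg n m" unfolding mdeg_def by (intro sum_mono le_funD[OF am])
    then show "a \<in> {a \<in> expvecs n. mdeg n a \<le> mdeg n m}" using expvecs_le[OF m am] by simp
  qed
  then show ?thesis using finite_expvecs_bounded finite_subset by blast
qed

lemma mulp_domain:
  fixes p g :: "(nat \<Rightarrow> nat) \<Rightarrow> 'a::field"
  assumes pp: "is_poly n p" and pnz: "p \<noteq> (\<lambda>_. 0)"
    and z: "\<forall>m\<in>expvecs n. mulp p g m = 0"
  shows "\<forall>m\<in>expvecs n. g m = 0"
proof (rule ccontr)
  assume "\<not> (\<forall>m\<in>expvecs n. g m = 0)"
  then obtain m0 where m0: "m0 \<in> expvecs n" "g m0 \<noteq> 0" by blast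
  define SG where "SG = {b \<in> expvecs n. g b \<noteq> 0}"
  define SP where "SP = {a. p a \<noteq> 0}"
  have finSP: "finite SP" using pp by (simp add: is_poly_def SP_def)
  have SPe: "SP \<subseteq> expvecs n" using pp by (auto simp: is_poly_def is_series_def SP_def)
  obtain a0 where a0: "a0 \<in> SP" using pnz by (auto simp: SP_def fun_eq_iff)
  define D where "D = (LEAST d. \<exists>b\<in>SG. mdeg n b = d)"
  define e where "e = (LEAST d. \<exists>a\<in>SP. mdeg n a = d)"
  have "\<exists>b\<in>SG. mdeg n b = D" unfolding D_def
    by (rule LeastI[of _ "mdeg n m0"]) (use m0 in \<open>auto simp: SG_def\<close>)
  have Dmin: "b \<in> SG \<Longrightarrow> D \<le> mdeg n b" for b unfolding D_def by (auto intro: Least_le)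
  have "\<exists>a\<in>SP. mdeg n a = e" unfolding e_def
    by (rule LeastI[of _ "mdeg n a0"]) (use a0 in auto)
  have emin: "a \<in> SP \<Longrightarrow> e \<le> mdeg n a" for a unfolding e_def by (auto intro: Least_le)
  define GD where "GD = {b \<in> SG. mdeg n b = D}"
  define PE where "PE = {a \<in> SP. mdeg n a = e}"
  have finGD: "finite GD"
    by (rule finite_subset[OF _ finite_expvecs_bounded[of n D]]) (auto simp: GD_def SG_def)
  have finPE: "finite PE" using finSP by (simp add: PE_def)
  have neGD: "GD \<noteq> {}" using \<open>\<exists>b\<in>SG. mdeg n b = D\<close> by (auto simp: GD_def)
  have nePE: "PE \<noteq> {}" using \<open>\<exists>a\<in>SP. mdeg n a = e\<close> by (auto simp: PE_def)
  define W where "W = D + e + 1"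
  define w where "w = wt W n"
  have "Min (w ` PE) \<in> w ` PE" using finPE nePE by (intro Min_in) auto
  then obtain as where as1: "as \<in> PE" and as0: "w as = Min (w ` PE)" by auto
  have as2: "w as \<le> w a" if "a \<in> PE" for a
    unfolding as0 using finPE that by (intro Min_le) auto
  note as = as1 as2
  have "Min (w ` GD) \<in> w ` GD" using finGD neGD by (intro Min_in) auto
  then obtain bs where bs1: "bs \<in> GD" and bs0: "w bs = Min (w ` GD)" by auto
  have bs2: "w bs \<le> w b" if "b \<in> GD" for b
    unfolding bs0 using finGD that by (intro Min_le) auto
  note bs = bs1 bs2
  have asE: "as \<in> expvecs n" and bsE: "bs \<in> expvecs n"
    using as bs SPe by (auto simp: PE_def GD_def SG_def)
  define m where "m = as + bs"
  have mE: "m \<in> expvecs n" using asE bsE by (auto simp: expvecs_def m_def)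
  have other: "xmon a g m = 0" if aSP: "a \<in> SP" and ne: "a \<noteq> as" for a
  proof (rule ccontr)
    assume nz: "xmon a g m \<noteq> 0"
    then have am: "a \<le> m" by (auto simp: xmon_def split: if_splits)
    define b where "b = (\<lambda>v. m v - a v)"
    have gb: "g b \<noteq> 0" using nz am by (simp add: xmon_def b_def)
    have aE: "a \<in> expvecs n" using aSP SPe by auto
    have bE: "b \<in> expvecs n" using mE by (auto simp: expvecs_def b_def)
    have mab: "m = a + b" using am by (auto simp: b_def le_fun_def fun_eq_iff)
    have bSG: "b \<in> SG" using bE gb by (simp add: SG_def)
    have "mdeg n a + mdeg n b = mdeg n (a + b)" by (simp add: mdeg_add)
    also have "\<dots> = mdeg n as + mdeg n bs" using mab unfolding m_def by (metis mdeg_add)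
    also have "\<dots> = e + D" using as(1) bs(1) by (simp add: PE_def GD_def)
    finally have "mdeg n a + mdeg n b = e + D" .
    moreover have "e \<le> mdeg n a" "D \<le> mdeg n b" using emin[OF aSP] Dmin[OF bSG] .
    ultimately have ea: "mdeg n a = e" and db: "mdeg n b = D" by linarith+
    have aPE: "a \<in> PE" using aSP ea by (simp add: PE_def)
    have bGD: "b \<in> GD" using bSG db by (simp add: GD_def)
    have "w a + w b = w (a + b)" by (simp add: w_def wt_add)
    also have "\<dots> = w as + w bs" using mab unfolding m_def w_def by (metis wt_add)
    finally have "w a + w b = w as + w bs" .
    moreover have "w as \<le> w a" "w bs \<le> w b" using as(2)[OF aPE] bs(2)[OF bGD] .
    ultimately have "w a = w as" by linarith
    moreover have "v < n \<Longrightarrow> a v < W" for v using le_mdeg[OF aE, of v] ea by (simp add: W_def)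
    moreover have "v < n \<Longrightarrow> as v < W" for v
      using le_mdeg[OF asE, of v] as(1) by (simp add: W_def PE_def)
    ultimately have eqv: "v < n \<Longrightarrow> a v = as v" for v
      unfolding w_def using wt_inj[of n a W as v] by blast
    have "a v = as v" for v
    proof (cases "v < n")
      case False
      then show ?thesis using aE asE by (simp add: expvecs_def)
    qed (rule eqv)
    then have "a = as" by (simp add: fun_eq_iff)
    then show False using ne by simp
  qed
  have asSP: "as \<in> SP" using as by (simp add: PE_def)
  have "mulp p g m = (\<Sum>a\<in>SP. p a * xmon a g m)" by (simp add: mulp_def SP_def)
  also have "\<dots> = p as * xmon as g m + (\<Sum>a\<in>SP - {as}. p a * xmon a g m)"
    by (rule sum.remove[OF finSP asSP])
  also have "(\<Sum>a\<in>SP - {as}. p a * xmon a g m) = 0"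
    by (intro sum.neutral) (auto simp: other)
  also have "xmon as g m = g bs"
  proof -
    have "as \<le> m" by (auto simp: m_def le_fun_def)
    moreover have "(\<lambda>v. m v - as v) = bs" by (auto simp: m_def)
    ultimately show ?thesis by (simp add: xmon_def)
  qed
  finally have "mulp p g m = p as * g bs" by simp
  moreover have "p as \<noteq> 0" using asSP by (simp add: SP_def)
  moreover have "g bs \<noteq> 0" using bs by (simp add: GD_def SG_def)
  ultimately show False using z mE by simp
qed


lemma series_dvar:
  assumes "i < n" "is_series n g" shows "is_series n (dvar i g)"
  unfolding is_series_def
proof (intro allI impI)
  fix m assume m: "m \<notin> expvecs n"
  then obtain v where v: "v \<ge> n" "m v \<noteq> 0" by (auto simp: expvecs_def)
  then have "m(i := m i + 1) \<notin> expvecs n" using assms(1) by (auto simp: expvecs_def)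
  then show "dvar i g m = 0" using assms(2) by (simp add: dvar_def is_series_def)
qed

lemma series_funpow_dvar: "i < n \<Longrightarrow> is_series n g \<Longrightarrow> is_series n ((dvar i ^^ j) g)"
  by (induction j) (auto intro: series_dvar)

lemma series_xmon:
  assumes "a \<in> expvecs n" "is_series n g" shows "is_series n (xmon a g)"
  unfolding is_series_def
proof (intro allI impI)
  fix m assume m: "m \<notin> expvecs n"
  then obtain v where v: "v \<ge> n" "m v \<noteq> 0" by (auto simp: expvecs_def)
  then have "(\<lambda>u. m u - a u) \<notin> expvecs n" using assms(1) by (auto simp: expvecs_def)
  then show "xmon a g m = 0" using assms(2) by (simp add: xmon_def is_series_def)
qed

lemma series_mulp:
  assumes "is_poly n p" "is_series n g" shows "is_series n (mulp p g)"
  unfolding is_series_def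
proof (intro allI impI)
  fix m assume m: "m \<notin> expvecs n"
  have "a \<in> expvecs n" if "p a \<noteq> 0" for a using assms(1) that by (auto simp: is_poly_def is_series_def)
  then have "xmon a g m = 0" if "p a \<noteq> 0" for a
    using series_xmon[OF _ assms(2)] m that by (auto simp: is_series_def)
  then show "mulp p g m = 0" by (simp add: mulp_def)
qed

lemma series_sum: "(\<And>x. x \<in> A \<Longrightarrow> is_series n (g x)) \<Longrightarrow> is_series n (\<Sum>x\<in>A. g x)"
  by (simp add: is_series_def fun_sum_apply)

lemma pmult_mulp:
  assumes m: "m \<in> expvecs n" and p: "is_poly n p"
  shows "pmult p g m = mulp p g m"
proof -
  have fin: "finite {a. a \<le> m}" using finite_le_expvec[OF m] .
  have finp: "finite {a. p a \<noteq> 0}" using p by (simp add: is_poly_def)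
  have "pmult p g m = (\<Sum>a\<in>{a. a \<le> m}. p a * g (\<lambda>v. m v - a v))" by (simp add: pmult_def)
  also have "\<dots> = (\<Sum>a\<in>{a. a \<le> m} \<inter> {a. p a \<noteq> 0}. p a * g (\<lambda>v. m v - a v))"
    using fin by (intro sum.mono_neutral_right) auto
  also have "\<dots> = (\<Sum>a\<in>{a. p a \<noteq> 0}. p a * xmon a g m)"
    using finp by (intro sum.mono_neutral_cong_left) (auto simp: xmon_def)
  finally show ?thesis by (simp add: mulp_def)
qed

lemma funpow_dvar_pder: "i < n \<Longrightarrow> (dvar i ^^ j) g = pder n ((\<lambda>_. 0)(i := j)) (g :: (nat \<Rightarrow> nat) \<Rightarrow> 'a::comm_semiring_1)"
proof (induction j)
  case 0 then show ?case by (simp add: pder_zero)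
next
  case (Suc j)
  have e: "((\<lambda>_. 0)(i := j))(i := ((\<lambda>_. 0)(i := j)) i + 1) = (\<lambda>_. 0::nat)(i := Suc j)" by simp
  have "(dvar i ^^ Suc j) g = dvar i (pder n ((\<lambda>_. 0)(i := j)) g)"
    by (simp only: funpow.simps(2) comp_apply Suc.IH[OF Suc.prems])
  also have "\<dots> = pder n ((\<lambda>_. 0)(i := Suc j)) g" unfolding dvar_pder[OF Suc.prems] e ..
  finally show ?case .
qed

lemma ore_relation:
  fixes f :: "(nat \<Rightarrow> nat) \<Rightarrow> 'a::field"
  assumes fs: "is_series n f" and i: "i < n" and l: "ore_op n l"
    and ann: "\<forall>m\<in>expvecs n. apply_ore i l f m = 0"
  shows "(\<Sum>j\<in>{j. l j \<noteq> (\<lambda>_. 0)}. mulp (l j) ((dvar i ^^ j) f)) = 0"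
proof (rule ext)
  fix m
  have ser: "is_series n (\<Sum>j\<in>{j. l j \<noteq> (\<lambda>_. 0)}. mulp (l j) ((dvar i ^^ j) f))"
    using l by (intro series_sum series_mulp series_funpow_dvar i fs) (auto simp: ore_op_def)
  show "(\<Sum>j\<in>{j. l j \<noteq> (\<lambda>_. 0)}. mulp (l j) ((dvar i ^^ j) f)) m = 0 m"
  proof (cases "m \<in> expvecs n")
    case True
    have "(\<Sum>j\<in>{j. l j \<noteq> (\<lambda>_. 0)}. mulp (l j) ((dvar i ^^ j) f)) m = apply_ore i l f m"
      using True l by (simp add: fun_sum_apply apply_ore_def pmult_mulp ore_op_def)
    then show ?thesis using ann True by simp
  next
    case False
    then show ?thesis using ser by (simp add: is_series_def)
  qed
qed


definition gen :: "nat \<Rightarrow> ((nat \<Rightarrow> nat) \<Rightarrow> 'a::field) \<Rightarrow> (nat \<Rightarrow> nat) set \<Rightarrow> (nat \<Rightarrow> nat) set \<Rightarrow> ((nat \<Rightarrow> nat) \<Rightarrow> 'a) set" where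
  "gen n f A \<Gamma> = {xmon \<beta> (pder n \<delta> f) | \<beta> \<delta>. \<beta> \<in> A \<and> \<delta> \<in> \<Gamma>}"

definition Sp :: "nat \<Rightarrow> ((nat \<Rightarrow> nat) \<Rightarrow> 'a::field) \<Rightarrow> (nat \<Rightarrow> nat) set \<Rightarrow> (nat \<Rightarrow> nat) set \<Rightarrow> ((nat \<Rightarrow> nat) \<Rightarrow> 'a) set" where
  "Sp n f A \<Gamma> = fs.span (gen n f A \<Gamma>)"

lemma gen_in_Sp: "\<beta> \<in> A \<Longrightarrow> \<delta> \<in> \<Gamma> \<Longrightarrow> xmon \<beta> (pder n \<delta> f) \<in> Sp n f A \<Gamma>"
  unfolding Sp_def gen_def by (rule fs.span_base) blast

lemma Sp_zero: "0 \<in> Sp n f A \<Gamma>" unfolding Sp_def by (rule fs.span_zero)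
lemma Sp_add: "x \<in> Sp n f A \<Gamma> \<Longrightarrow> y \<in> Sp n f A \<Gamma> \<Longrightarrow> x + y \<in> Sp n f A \<Gamma>"
  unfolding Sp_def by (rule fs.span_add)
lemma Sp_diff: "x \<in> Sp n f A \<Gamma> \<Longrightarrow> y \<in> Sp n f A \<Gamma> \<Longrightarrow> x - y \<in> Sp n f A \<Gamma>"
  unfolding Sp_def by (rule fs.span_diff)
lemma Sp_sc: "x \<in> Sp n f A \<Gamma> \<Longrightarrow> sc c x \<in> Sp n f A \<Gamma>"
  unfolding Sp_def by (rule fs.span_scale)
lemma Sp_sum: "(\<And>x. x \<in> I \<Longrightarrow> g x \<in> Sp n f A \<Gamma>) \<Longrightarrow> (\<Sum>x\<in>I. g x) \<in> Sp n f A \<Gamma>"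
  unfolding Sp_def by (rule fs.span_sum)
lemma Sp_neg: "x \<in> Sp n f A \<Gamma> \<Longrightarrow> - x \<in> Sp n f A \<Gamma>"
  unfolding Sp_def by (rule fs.span_neg)

lemma Sp_mono: "A \<subseteq> A' \<Longrightarrow> \<Gamma> \<subseteq> \<Gamma>' \<Longrightarrow> x \<in> Sp n f A \<Gamma> \<Longrightarrow> x \<in> Sp n f A' \<Gamma>'"
proof -
  assume "A \<subseteq> A'" "\<Gamma> \<subseteq> \<Gamma>'" "x \<in> Sp n f A \<Gamma>"
  moreover have "gen n f A \<Gamma> \<subseteq> gen n f A' \<Gamma>'" using \<open>A \<subseteq> A'\<close> \<open>\<Gamma> \<subseteq> \<Gamma>'\<close> by (auto simp: gen_def)
  ultimately show ?thesis unfolding Sp_def using fs.span_mono by blast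
qed

lemma Sp_lin:
  assumes "lin \<phi>" "\<And>\<beta> \<delta>. \<beta> \<in> A \<Longrightarrow> \<delta> \<in> \<Gamma> \<Longrightarrow> \<phi> (xmon \<beta> (pder n \<delta> f)) \<in> Sp n f A' \<Gamma>'"
    "x \<in> Sp n f A \<Gamma>"
  shows "\<phi> x \<in> Sp n f A' \<Gamma>'"
  using lin_span[OF assms(1), of "gen n f A \<Gamma>" "gen n f A' \<Gamma>'" x] assms(2,3)
  unfolding Sp_def gen_def by blast

lemma Sp_xmon:
  assumes "\<And>\<beta>. \<beta> \<in> A \<Longrightarrow> \<gamma> + \<beta> \<in> A'" "x \<in> Sp n f A \<Gamma>"
  shows "xmon \<gamma> x \<in> Sp n f A' \<Gamma>"
  by (rule Sp_lin[OF lin_xmon _ assms(2)]) (simp add: xmon_xmon gen_in_Sp assms(1))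

lemma Sp_mulp:
  assumes "\<And>a \<beta>. p a \<noteq> 0 \<Longrightarrow> \<beta> \<in> A \<Longrightarrow> a + \<beta> \<in> A'" "x \<in> Sp n f A \<Gamma>"
  shows "mulp p x \<in> Sp n f A' \<Gamma>"
proof (rule Sp_lin[OF lin_mulp _ assms(2)])
  fix \<beta> \<delta> assume b: "\<beta> \<in> A" and d: "\<delta> \<in> \<Gamma>"
  show "mulp p (xmon \<beta> (pder n \<delta> f)) \<in> Sp n f A' \<Gamma>"
    unfolding mulp_sum xmon_xmon
    by (intro Sp_sum Sp_sc gen_in_Sp assms(1) b d) simp
qed

lemma Sp_dvar:
  assumes j: "j < n"
    and A: "\<And>\<beta>. \<beta> \<in> A \<Longrightarrow> \<beta> \<in> A' \<and> \<beta>(j := \<beta> j - 1) \<in> A'"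
    and G: "\<And>\<delta>. \<delta> \<in> \<Gamma> \<Longrightarrow> \<delta> \<in> \<Gamma>' \<and> \<delta>(j := \<delta> j + 1) \<in> \<Gamma>'"
    and x: "x \<in> Sp n f A \<Gamma>"
  shows "dvar j x \<in> Sp n f A' \<Gamma>'"
proof (rule Sp_lin[OF lin_dvar _ x])
  fix \<beta> \<delta> assume b: "\<beta> \<in> A" and d: "\<delta> \<in> \<Gamma>"
  have "dvar j (xmon \<beta> (pder n \<delta> f)) =
    xmon \<beta> (pder n (\<delta>(j := \<delta> j + 1)) f) + sc (of_nat (\<beta> j)) (xmon (\<beta>(j := \<beta> j - 1)) (pder n \<delta> f))"
    by (simp add: dvar_xmon dvar_pder[OF j])
  also have "\<dots> \<in> Sp n f A' \<Gamma>'"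
    using A[OF b] G[OF d] by (intro Sp_add Sp_sc gen_in_Sp) auto
  finally show "dvar j (xmon \<beta> (pder n \<delta> f)) \<in> Sp n f A' \<Gamma>'" .
qed

definition Dg :: "nat \<Rightarrow> nat \<Rightarrow> (nat \<Rightarrow> nat) set" where
  "Dg n Y = {\<beta> \<in> expvecs n. mdeg n \<beta> \<le> Y}"

lemma Dg_dec: "\<beta> \<in> Dg n Y \<Longrightarrow> \<beta>(j := \<beta> j - 1) \<in> Dg n Y"
proof -
  assume b: "\<beta> \<in> Dg n Y"
  have le: "\<beta>(j := \<beta> j - 1) \<le> \<beta>" by (simp add: le_fun_def)
  have "mdeg n (\<beta>(j := \<beta> j - 1)) \<le> mdeg n \<beta>" unfolding mdeg_def by (intro sum_mono le_funD[OF le])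
  moreover have "\<beta>(j := \<beta> j - 1) \<in> expvecs n" using expvecs_le[OF _ le] b by (simp add: Dg_def)
  ultimately show ?thesis using b by (simp add: Dg_def)
qed

lemma Dg_add: "a \<in> Dg n d1 \<Longrightarrow> \<beta> \<in> Dg n d2 \<Longrightarrow> a + \<beta> \<in> Dg n (d1 + d2)"
  by (auto simp: Dg_def mdeg_add expvecs_def)

lemma Dg_mono: "Y \<le> Y' \<Longrightarrow> Dg n Y \<subseteq> Dg n Y'"
  by (auto simp: Dg_def)

lemma poly_Dg:
  assumes "is_poly n p" "tdeg n p \<le> d" "p a \<noteq> 0" shows "a \<in> Dg n d"
proof -
  have fin: "finite {m. p m \<noteq> 0}" using assms(1) by (simp add: is_poly_def)
  have "finite ({mdeg n m | m. p m \<noteq> 0} \<union> {0})"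
    using fin by (simp add: setcompr_eq_image)
  then have "mdeg n a \<le> tdeg n p" unfolding tdeg_def using assms(3) by (intro Max_ge) auto
  moreover have "a \<in> expvecs n" using assms(1,3) by (auto simp: is_poly_def is_series_def)
  ultimately show ?thesis using assms(2) by (simp add: Dg_def)
qed

definition Lam :: "(nat \<Rightarrow> (nat \<Rightarrow> nat) \<Rightarrow> 'a::field) \<Rightarrow> nat list \<Rightarrow> ((nat \<Rightarrow> nat) \<Rightarrow> 'a) \<Rightarrow> (nat \<Rightarrow> nat) \<Rightarrow> 'a" where
  "Lam lc xs g = foldr (\<lambda>i. mulp (lc i)) xs g"

lemma Lam_Nil[simp]: "Lam lc [] g = g" by (simp add: Lam_def)
lemma Lam_Cons[simp]: "Lam lc (x # xs) g = mulp (lc x) (Lam lc xs g)" by (simp add: Lam_def)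
lemma Lam_append: "Lam lc (xs @ ys) g = Lam lc xs (Lam lc ys g)" by (simp add: Lam_def)

lemma Lam_mulp: "Lam lc xs (mulp p g) = mulp p (Lam lc xs g)"
  by (induction xs) (simp_all add: mulp_mulp)

lemma Lam_xmon: "Lam lc xs (xmon a g) = xmon a (Lam lc xs g)"
  by (induction xs) (simp_all add: xmon_mulp)

lemma Lam_comm: "Lam lc xs (Lam lc ys g) = Lam lc ys (Lam lc xs g)"
  by (induction xs) (simp_all add: Lam_mulp)

lemma Lam_remove: "i \<in> set xs \<Longrightarrow> Lam lc xs g = Lam lc (remove1 i xs) (mulp (lc i) g)"
proof (induction xs)
  case Nil then show ?case by simp
next
  case (Cons x xs)
  show ?case
  proof (cases "x = i")
    case True then show ?thesis by (simp add: Lam_mulp)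
  next
    case False then show ?thesis using Cons by simp
  qed
qed

lemma lin_Lam: "lin (Lam lc xs)"
proof (induction xs)
  case Nil then show ?case by (simp add: lin_def)
next
  case (Cons x xs)
  have "lin (\<lambda>g. mulp (lc x) (Lam lc xs g))" by (rule lin_comp[OF lin_mulp Cons])
  then show ?case by (simp add: lin_def)
qed

lemma Lam_Sp:
  assumes "\<And>i. i \<in> set xs \<Longrightarrow> is_poly n (lc i) \<and> tdeg n (lc i) \<le> d"
    "g \<in> Sp n f (Dg n Y) \<Gamma>"
  shows "Lam lc xs g \<in> Sp n f (Dg n (Y + length xs * d)) \<Gamma>"
  using assms
proof (induction xs arbitrary: Y)
  case Nil then show ?case by simp
next
  case (Cons x xs)
  have "Lam lc xs g \<in> Sp n f (Dg n (Y + length xs * d)) \<Gamma>" using Cons by auto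
  then have "mulp (lc x) (Lam lc xs g) \<in> Sp n f (Dg n (d + (Y + length xs * d))) \<Gamma>"
    by (rule Sp_mulp[rotated]) (use Cons.prems(1) in \<open>auto intro: Dg_add poly_Dg\<close>)
  then show ?case by (simp add: algebra_simps)
qed

lemma Lam_domain:
  assumes "\<And>i. i \<in> set xs \<Longrightarrow> is_poly n (lc i) \<and> lc i \<noteq> (\<lambda>_. 0)"
    "\<forall>m\<in>expvecs n. Lam lc xs g m = 0"
  shows "\<forall>m\<in>expvecs n. g m = 0"
  using assms
proof (induction xs)
  case Nil then show ?case by simp
next
  case (Cons x xs)
  have "\<forall>m\<in>expvecs n. Lam lc xs g m = 0"
    using mulp_domain[of n "lc x" "Lam lc xs g"] Cons.prems by auto
  then show ?case using Cons by auto
qed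


definition dsetup :: "nat \<Rightarrow> ((nat \<Rightarrow> nat) \<Rightarrow> 'a::field) \<Rightarrow> (nat \<Rightarrow> nat \<Rightarrow> (nat \<Rightarrow> nat) \<Rightarrow> 'a) \<Rightarrow> nat \<Rightarrow> bool" where
  "dsetup n f L d \<longleftrightarrow> is_series n f \<and> (\<forall>i<n. ore_op n (L i) \<and> L i \<noteq> (\<lambda>_ _. 0) \<and>
     (\<forall>m\<in>expvecs n. apply_ore i (L i) f m = 0) \<and> op_degree n (L i) \<le> d)"

definition lcf :: "(nat \<Rightarrow> nat \<Rightarrow> (nat \<Rightarrow> nat) \<Rightarrow> 'a::zero) \<Rightarrow> nat \<Rightarrow> (nat \<Rightarrow> nat) \<Rightarrow> 'a" where
  "lcf L i = L i (op_order (L i))"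

definition lt :: "(nat \<Rightarrow> nat) \<Rightarrow> (nat \<Rightarrow> nat) set" where
  "lt \<delta> = {\<delta>'. \<delta>' \<le> \<delta> \<and> \<delta>' \<noteq> \<delta>}"

lemma op_order_in:
  assumes "ore_op n l" "l \<noteq> (\<lambda>_. 0)"
  shows "l (op_order l) \<noteq> (\<lambda>_. 0)" "\<And>j. l j \<noteq> (\<lambda>_. 0) \<Longrightarrow> j \<le> op_order l"
proof -
  let ?S = "{j. l j \<noteq> (\<lambda>_. 0)}"
  have fin: "finite ?S" using assms(1) by (simp add: ore_op_def)
  obtain j0 where j0: "j0 \<in> ?S" using assms(2) by (auto simp: fun_eq_iff)
  have M: "Max (?S \<union> {0}) \<in> ?S \<union> {0}" using fin by (intro Max_in) auto
  have ge: "j \<in> ?S \<Longrightarrow> j \<le> Max (?S \<union> {0})" for j using fin by (intro Max_ge) auto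
  show "\<And>j. l j \<noteq> (\<lambda>_. 0) \<Longrightarrow> j \<le> op_order l" using ge by (simp add: op_order_def)
  have "Max (?S \<union> {0}) \<in> ?S"
  proof (cases "Max (?S \<union> {0}) \<in> ?S")
    case False
    then have "Max (?S \<union> {0}) = 0" using M by auto
    then have "j0 = 0" using ge[OF j0] by simp
    then show ?thesis using j0 \<open>Max (?S \<union> {0}) = 0\<close> by simp
  qed
  then show "l (op_order l) \<noteq> (\<lambda>_. 0)" by (simp add: op_order_def)
qed

lemma tdeg_le_op_degree:
  assumes "ore_op n l" "l j \<noteq> (\<lambda>_. 0)" shows "tdeg n (l j) \<le> op_degree n l"
proof -
  have fin: "finite {j. l j \<noteq> (\<lambda>_. 0)}" using assms(1) by (simp add: ore_op_def)
  have "finite {tdeg n (l j) | j. l j \<noteq> (\<lambda>_. 0)}"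
    using fin by (simp add: setcompr_eq_image)
  then show ?thesis unfolding op_degree_def using assms(2) by (intro Max_ge) auto
qed

lemma setup_coeff:
  assumes "dsetup n f L d" "i < n" "L i j \<noteq> (\<lambda>_. 0)"
  shows "is_poly n (L i j)" "tdeg n (L i j) \<le> d" "j \<le> op_order (L i)"
proof -
  have o: "ore_op n (L i)" "L i \<noteq> (\<lambda>_ _. 0)" "op_degree n (L i) \<le> d"
    using assms(1,2) by (auto simp: dsetup_def)
  show "is_poly n (L i j)" using o by (simp add: ore_op_def)
  show "tdeg n (L i j) \<le> d" using tdeg_le_op_degree[OF o(1) assms(3)] o(3) by simp
  show "j \<le> op_order (L i)" using op_order_in(2)[OF o(1) _ assms(3)] o(2) by (auto simp: fun_eq_iff)
qed

lemma setup_lcf: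
  assumes "dsetup n f L d" "i < n"
  shows "lcf L i \<noteq> (\<lambda>_. 0)" "is_poly n (lcf L i)" "tdeg n (lcf L i) \<le> d"
proof -
  have o: "ore_op n (L i)" "L i \<noteq> (\<lambda>_ _. 0)" using assms by (auto simp: dsetup_def)
  have "L i \<noteq> (\<lambda>_. 0)" using o(2) by (auto simp: fun_eq_iff)
  then show nz: "lcf L i \<noteq> (\<lambda>_. 0)" using op_order_in(1)[OF o(1)] by (simp add: lcf_def)
  show "is_poly n (lcf L i)" "tdeg n (lcf L i) \<le> d"
    using setup_coeff[OF assms nz[unfolded lcf_def]] by (simp_all add: lcf_def)
qed

lemma zero_Dg: "(\<lambda>_. 0) \<in> Dg n 0" by (simp add: Dg_def expvecs_def mdeg_def)

lemma pder_Sp0: "pder n \<delta> f \<in> Sp n f (Dg n 0) {\<delta>}"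
  using gen_in_Sp[OF zero_Dg, of \<delta> "{\<delta>}" n f] by (simp add: xmon_0')

lemma mulp_Sp_single:
  assumes "is_poly n p" "tdeg n p \<le> d" "\<delta> \<in> \<Gamma>"
  shows "mulp p (pder n \<delta> f) \<in> Sp n f (Dg n d) \<Gamma>"
proof -
  have "mulp p (pder n \<delta> f) \<in> Sp n f (Dg n d) {\<delta>}"
    by (rule Sp_mulp[OF _ pder_Sp0]) (use assms in \<open>auto dest: poly_Dg intro: Dg_add[of _ _ d _ 0, simplified]\<close>)
  then show ?thesis by (rule Sp_mono[rotated 2]) (use assms in auto)
qed

lemma rel_base:
  fixes f :: "(nat \<Rightarrow> nat) \<Rightarrow> 'a::field"
  assumes su: "dsetup n f L d" and i: "i < n"
  shows "mulp (lcf L i) (pder n ((\<lambda>_. 0)(i := op_order (L i))) f)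
           \<in> Sp n f (Dg n d) (lt ((\<lambda>_. 0)(i := op_order (L i))))"
proof -
  let ?r = "op_order (L i)"
  let ?S = "{j. L i j \<noteq> (\<lambda>_. 0)}"
  let ?t = "\<lambda>j. mulp (L i j) ((dvar i ^^ j) f)"
  have o: "ore_op n (L i)" "L i \<noteq> (\<lambda>_ _. 0)" using su i by (auto simp: dsetup_def)
  have fin: "finite ?S" using o by (simp add: ore_op_def)
  have rS: "?r \<in> ?S" using setup_lcf(1)[OF su i] by (simp add: lcf_def)
  have rel: "(\<Sum>j\<in>?S. ?t j) = 0"
    using ore_relation[of n f i "L i"] su i by (auto simp: dsetup_def)
  have "(\<Sum>j\<in>?S. ?t j) = ?t ?r + (\<Sum>j\<in>?S - {?r}. ?t j)" by (rule sum.remove[OF fin rS])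
  then have eq: "?t ?r = - (\<Sum>j\<in>?S - {?r}. ?t j)" using rel by (simp add: eq_neg_iff_add_eq_0)
  have "(\<Sum>j\<in>?S - {?r}. ?t j) \<in> Sp n f (Dg n d) (lt ((\<lambda>_. 0)(i := ?r)))"
  proof (intro Sp_sum)
    fix j assume j: "j \<in> ?S - {?r}"
    have jr: "j < ?r" using setup_coeff(3)[OF su i] j by force
    have "?t j = mulp (L i j) (pder n ((\<lambda>_. 0)(i := j)) f)" by (simp add: funpow_dvar_pder[OF i])
    also have "\<dots> \<in> Sp n f (Dg n d) (lt ((\<lambda>_. 0)(i := ?r)))"
      using setup_coeff[OF su i] j jr
      by (intro mulp_Sp_single) (auto simp: lt_def le_fun_def fun_eq_iff split: if_splits)
    finally show "?t j \<in> Sp n f (Dg n d) (lt ((\<lambda>_. 0)(i := ?r)))" .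
  qed
  then have "?t ?r \<in> Sp n f (Dg n d) (lt ((\<lambda>_. 0)(i := ?r)))" unfolding eq by (rule Sp_neg)
  then show ?thesis by (simp add: lcf_def funpow_dvar_pder[OF i])
qed

lemma dvar_mulp:
  "dvar j (mulp p g) = mulp p (dvar j g) +
     (\<Sum>a\<in>{a. p a \<noteq> 0}. sc (p a * of_nat (a j)) (xmon (a(j := a j - 1)) g))"
proof -
  have "dvar j (mulp p g) = (\<Sum>a\<in>{a. p a \<noteq> 0}. sc (p a) (dvar j (xmon a g)))"
    by (simp add: mulp_sum lin_sum[OF lin_dvar] lin_sc[OF lin_dvar])
  also have "\<dots> = (\<Sum>a\<in>{a. p a \<noteq> 0}. sc (p a) (xmon a (dvar j g)) +
                    sc (p a * of_nat (a j)) (xmon (a(j := a j - 1)) g))"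
    by (simp add: dvar_xmon fs.scale_right_distrib)
  also have "\<dots> = mulp p (dvar j g) +
     (\<Sum>a\<in>{a. p a \<noteq> 0}. sc (p a * of_nat (a j)) (xmon (a(j := a j - 1)) g))"
    by (simp add: sum.distrib mulp_sum)
  finally show ?thesis .
qed

lemma rel_step:
  fixes f :: "(nat \<Rightarrow> nat) \<Rightarrow> 'a::field"
  assumes p: "is_poly n p" "tdeg n p \<le> d" and j: "j < n"
    and R: "mulp p (pder n \<delta> f) \<in> Sp n f (Dg n d) (lt \<delta>)"
  shows "mulp p (pder n (\<delta>(j := \<delta> j + 1)) f) \<in> Sp n f (Dg n d) (lt (\<delta>(j := \<delta> j + 1)))"
proof -
  let ?d = "\<delta>(j := \<delta> j + 1)"
  let ?E = "\<Sum>a\<in>{a. p a \<noteq> 0}. sc (p a * of_nat (a j)) (xmon (a(j := a j - 1)) (pder n \<delta> f))"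
  have eq: "mulp p (pder n ?d f) = dvar j (mulp p (pder n \<delta> f)) - ?E"
    by (simp add: dvar_mulp dvar_pder[OF j])
  have lt1: "\<delta>' \<in> lt \<delta> \<Longrightarrow> \<delta>' \<in> lt ?d \<and> \<delta>'(j := \<delta>' j + 1) \<in> lt ?d" for \<delta>'
  proof -
    assume a: "\<delta>' \<in> lt \<delta>"
    then have le: "\<forall>v. \<delta>' v \<le> \<delta> v" and ne: "\<delta>' \<noteq> \<delta>" by (auto simp: lt_def le_fun_def)
    have "\<delta>' \<noteq> ?d"
    proof
      assume "\<delta>' = ?d" then have "\<delta>' j = \<delta> j + 1" by simp
      moreover have "\<delta>' j \<le> \<delta> j" using le by blast
      ultimately show False by simp
    qed
    moreover have "\<delta>'(j := \<delta>' j + 1) \<noteq> ?d"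
    proof
      assume h: "\<delta>'(j := \<delta>' j + 1) = ?d"
      have "\<delta>' v = \<delta> v" for v using fun_cong[OF h, of v] by (cases "v = j") auto
      then show False using ne by (simp add: fun_eq_iff)
    qed
    moreover have "\<delta>' \<le> ?d" unfolding le_fun_def
    proof
      fix v show "\<delta>' v \<le> ?d v" using le[rule_format, of v] by (cases "v = j") auto
    qed
    moreover have "\<delta>'(j := \<delta>' j + 1) \<le> ?d" unfolding le_fun_def
    proof
      fix v show "(\<delta>'(j := \<delta>' j + 1)) v \<le> ?d v" using le[rule_format, of v] by (cases "v = j") auto
    qed
    ultimately show ?thesis by (simp add: lt_def)
  qed
  have "dvar j (mulp p (pder n \<delta> f)) \<in> Sp n f (Dg n d) (lt ?d)"
  proof (rule Sp_dvar[OF j _ _ R])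
    fix \<beta> :: "nat \<Rightarrow> nat" assume "\<beta> \<in> Dg n d"
    then show "\<beta> \<in> Dg n d \<and> \<beta>(j := \<beta> j - 1) \<in> Dg n d" using Dg_dec by blast
  next
    fix \<delta>' assume "\<delta>' \<in> lt \<delta>"
    then show "\<delta>' \<in> lt ?d \<and> \<delta>'(j := \<delta>' j + 1) \<in> lt ?d" by (rule lt1)
  qed
  moreover have "?E \<in> Sp n f (Dg n d) (lt ?d)"
  proof (intro Sp_sum Sp_sc gen_in_Sp)
    fix a assume "a \<in> {a. p a \<noteq> 0}"
    then have "a \<in> Dg n d" using p poly_Dg by blast
    then show "a(j := a j - 1) \<in> Dg n d" by (rule Dg_dec)
  next
    have "\<delta> \<le> ?d" by (simp add: le_fun_def)
    moreover have "\<delta> \<noteq> ?d"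
    proof
      assume "\<delta> = ?d" then have "\<delta> j = \<delta> j + 1" by (metis fun_upd_same)
      then show False by simp
    qed
    ultimately show "\<delta> \<in> lt ?d" by (simp add: lt_def)
  qed
  ultimately show ?thesis unfolding eq by (rule Sp_diff)
qed

lemma rel_all:
  fixes f :: "(nat \<Rightarrow> nat) \<Rightarrow> 'a::field"
  assumes su: "dsetup n f L d" and i: "i < n"
  shows "\<delta> \<in> expvecs n \<Longrightarrow> op_order (L i) \<le> \<delta> i \<Longrightarrow>
    mulp (lcf L i) (pder n \<delta> f) \<in> Sp n f (Dg n d) (lt \<delta>)"
proof (induction "mdeg n \<delta>" arbitrary: \<delta> rule: less_induct)
  case less
  let ?r = "op_order (L i)"
  let ?b = "(\<lambda>_. 0::nat)(i := ?r)"
  show ?case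
  proof (cases "\<delta> = ?b")
    case True then show ?thesis using rel_base[OF su i] by simp
  next
    case False
    then obtain j where jne: "\<delta> j \<noteq> ?b j" by (auto simp: fun_eq_iff)
    have jgt: "\<delta> j > ?b j" using jne less.prems(2) by (cases "j = i") auto
    have jn: "j < n"
    proof (rule ccontr)
      assume "\<not> j < n"
      then have "\<delta> j = 0" using less.prems(1) by (simp add: expvecs_def)
      then show False using jgt by simp
    qed
    define \<delta>0 where "\<delta>0 = \<delta>(j := \<delta> j - 1)"
    have d0: "\<delta>0(j := \<delta>0 j + 1) = \<delta>" using jgt by (auto simp: \<delta>0_def fun_eq_iff)
    have le0: "\<delta>0 \<le> \<delta>" by (simp add: \<delta>0_def le_fun_def)
    have e0: "\<delta>0 \<in> expvecs n" using expvecs_le[OF less.prems(1) le0] .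
    have "mdeg n \<delta>0 < mdeg n \<delta>"
    proof -
      have "mdeg n \<delta> = mdeg n \<delta>0 + 1"
      proof -
        have "mdeg n \<delta> = (\<Sum>v<n. \<delta>0 v + (if v = j then 1 else 0))"
          unfolding mdeg_def using jgt by (intro sum.cong) (auto simp: \<delta>0_def)
        also have "\<dots> = mdeg n \<delta>0 + 1" using jn by (simp add: sum.distrib mdeg_def)
        finally show ?thesis .
      qed
      then show ?thesis by simp
    qed
    moreover have "?r \<le> \<delta>0 i" using less.prems(2) jgt by (cases "j = i") (auto simp: \<delta>0_def)
    ultimately have "mulp (lcf L i) (pder n \<delta>0 f) \<in> Sp n f (Dg n d) (lt \<delta>0)"
      using less.hyps e0 by blast
    from rel_step[OF setup_lcf(2,3)[OF su i] jn this] show ?thesis unfolding d0 .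
  qed
qed


definition Box :: "nat \<Rightarrow> (nat \<Rightarrow> nat \<Rightarrow> (nat \<Rightarrow> nat) \<Rightarrow> 'a::zero) \<Rightarrow> nat list \<Rightarrow> (nat \<Rightarrow> nat) set" where
  "Box n L hs = {\<delta> \<in> expvecs n. (\<forall>v. v \<notin> set hs \<longrightarrow> \<delta> v = 0) \<and> (\<forall>i\<in>set hs. \<delta> i < op_order (L i))}"

definition SuppH :: "nat \<Rightarrow> nat list \<Rightarrow> (nat \<Rightarrow> nat) set" where
  "SuppH n hs = {\<delta> \<in> expvecs n. \<forall>v. v \<notin> set hs \<longrightarrow> \<delta> v = 0}"

definition rep :: "nat list \<Rightarrow> nat \<Rightarrow> nat list" where
  "rep hs k = concat (replicate k hs)"

lemma rep_add: "rep hs (a + b) = rep hs a @ rep hs b"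
  by (simp add: rep_def replicate_add)

lemma rep_Suc: "rep hs (Suc k) = hs @ rep hs k"
  by (simp add: rep_def)

lemma length_rep: "length (rep hs k) = k * length hs"
  by (induction k) (auto simp: rep_def)

lemma set_rep: "set (rep hs k) \<subseteq> set hs"
  by (auto simp: rep_def)

lemma lt_mdeg:
  assumes "\<delta> \<in> expvecs n" "\<delta>' \<in> lt \<delta>" shows "mdeg n \<delta>' < mdeg n \<delta>"
proof -
  have le: "\<delta>' \<le> \<delta>" and ne: "\<delta>' \<noteq> \<delta>" using assms(2) by (auto simp: lt_def)
  obtain v where v: "\<delta>' v \<noteq> \<delta> v" using ne by (auto simp: fun_eq_iff)
  have vn: "v < n"
  proof (rule ccontr)
    assume "\<not> v < n"
    then have "\<delta> v = 0" using assms(1) by (simp add: expvecs_def)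
    then show False using v le_funD[OF le, of v] by simp
  qed
  have "v \<in> {..<n}" "\<delta>' v < \<delta> v" using vn v le_funD[OF le, of v] by auto
  then show ?thesis unfolding mdeg_def
    by (intro sum_strict_mono_ex1) (auto intro: le_funD[OF le])
qed

lemma lt_SuppH: "\<delta> \<in> SuppH n hs \<Longrightarrow> \<delta>' \<in> lt \<delta> \<Longrightarrow> \<delta>' \<in> SuppH n hs"
proof -
  assume a: "\<delta> \<in> SuppH n hs" "\<delta>' \<in> lt \<delta>"
  then have le: "\<delta>' \<le> \<delta>" by (simp add: lt_def)
  have "\<delta>' \<in> expvecs n" using expvecs_le[OF _ le] a(1) by (simp add: SuppH_def)
  moreover have "v \<notin> set hs \<Longrightarrow> \<delta>' v = 0" for v using a(1) le_funD[OF le, of v] by (simp add: SuppH_def)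
  ultimately show ?thesis by (simp add: SuppH_def)
qed

lemma reduce:
  fixes f :: "(nat \<Rightarrow> nat) \<Rightarrow> 'a::field"
  assumes su: "dsetup n f L d" and hs: "set hs \<subseteq> {..<n}"
  shows "\<delta> \<in> SuppH n hs \<Longrightarrow> Lam (lcf L) (rep hs (mdeg n \<delta> + 1)) (pder n \<delta> f)
           \<in> Sp n f (Dg n ((mdeg n \<delta> + 1) * (length hs * d))) (Box n L hs)"
proof (induction "mdeg n \<delta>" arbitrary: \<delta> rule: less_induct)
  case less
  let ?h = "length hs"
  let ?k = "mdeg n \<delta>"
  have lcp: "\<And>i. i \<in> set hs \<Longrightarrow> is_poly n (lcf L i) \<and> tdeg n (lcf L i) \<le> d"
    using setup_lcf[OF su] hs by auto
  have LamSp: "\<And>xs g Y \<Gamma>. set xs \<subseteq> set hs \<Longrightarrow> g \<in> Sp n f (Dg n Y) \<Gamma> \<Longrightarrow>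
      Lam (lcf L) xs g \<in> Sp n f (Dg n (Y + length xs * d)) \<Gamma>"
    using lcp by (intro Lam_Sp) auto
  show ?case
  proof (cases "\<delta> \<in> Box n L hs")
    case True
    have "pder n \<delta> f \<in> Sp n f (Dg n 0) (Box n L hs)"
      using gen_in_Sp[OF zero_Dg True, of n f] by (simp add: xmon_0')
    from LamSp[OF set_rep this, of "?k + 1"] show ?thesis by (simp add: length_rep algebra_simps)
  next
    case False
    then obtain i where i: "i \<in> set hs" "op_order (L i) \<le> \<delta> i"
      using less.prems by (auto simp: Box_def SuppH_def not_less)
    have "i < n" using i hs by auto
    have dE: "\<delta> \<in> expvecs n" using less.prems by (simp add: SuppH_def)
    define hs' where "hs' = remove1 i hs"
    have lhs': "length hs' = ?h - 1" using i by (simp add: hs'_def length_remove1)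
    have shs': "set hs' \<subseteq> set hs" by (simp add: hs'_def set_remove1_subset)
    have hpos: "?h \<ge> 1" using i by (cases hs) auto
    have Y: "mulp (lcf L i) (pder n \<delta> f) \<in> Sp n f (Dg n d) (lt \<delta>)"
      using rel_all[OF su \<open>i < n\<close> dE i(2)] .
    have eq: "Lam (lcf L) (rep hs (?k + 1)) (pder n \<delta> f)
        = Lam (lcf L) (rep hs ?k) (Lam (lcf L) hs' (mulp (lcf L i) (pder n \<delta> f)))"
    proof -
      have "Lam (lcf L) (rep hs (?k + 1)) (pder n \<delta> f) = Lam (lcf L) hs (Lam (lcf L) (rep hs ?k) (pder n \<delta> f))"
        by (simp add: rep_Suc Lam_append)
      also have "\<dots> = Lam (lcf L) (rep hs ?k) (Lam (lcf L) hs (pder n \<delta> f))" by (rule Lam_comm)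
      also have "Lam (lcf L) hs (pder n \<delta> f) = Lam (lcf L) hs' (mulp (lcf L i) (pder n \<delta> f))"
        unfolding hs'_def by (rule Lam_remove[OF i(1)])
      finally show ?thesis .
    qed
    have lin: "lin (\<lambda>g. Lam (lcf L) (rep hs ?k) (Lam (lcf L) hs' g))"
      by (rule lin_comp[OF lin_Lam lin_Lam])
    have "Lam (lcf L) (rep hs ?k) (Lam (lcf L) hs' (mulp (lcf L i) (pder n \<delta> f)))
        \<in> Sp n f (Dg n ((?k + 1) * (?h * d))) (Box n L hs)"
    proof (rule Sp_lin[OF lin _ Y])
      fix \<beta> \<delta>' assume b: "\<beta> \<in> Dg n d" and d': "\<delta>' \<in> lt \<delta>"
      let ?k' = "mdeg n \<delta>'"
      have kk: "?k' < ?k" using lt_mdeg[OF dE d'] .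
      have S': "\<delta>' \<in> SuppH n hs" using lt_SuppH[OF less.prems d'] .
      have IH: "Lam (lcf L) (rep hs (?k' + 1)) (pder n \<delta>' f)
           \<in> Sp n f (Dg n ((?k' + 1) * (?h * d))) (Box n L hs)"
        using less.hyps[OF kk S'] .
      have ksplit: "?k = (?k - ?k' - 1) + (?k' + 1)" using kk by simp
      have "Lam (lcf L) (rep hs ?k) (pder n \<delta>' f)
          = Lam (lcf L) (rep hs (?k - ?k' - 1)) (Lam (lcf L) (rep hs (?k' + 1)) (pder n \<delta>' f))"
      proof -
        have "rep hs ?k = rep hs ((?k - ?k' - 1) + (?k' + 1))"
          by (rule arg_cong[where f="rep hs", OF ksplit])
        also have "\<dots> = rep hs (?k - ?k' - 1) @ rep hs (?k' + 1)" by (rule rep_add)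
        finally have "rep hs ?k = rep hs (?k - ?k' - 1) @ rep hs (?k' + 1)" .
        then show ?thesis by (simp only: Lam_append)
      qed
      also have "\<dots> \<in> Sp n f (Dg n ((?k' + 1) * (?h * d) + length (rep hs (?k - ?k' - 1)) * d)) (Box n L hs)"
        by (rule LamSp[OF set_rep IH])
      also have "(?k' + 1) * (?h * d) + length (rep hs (?k - ?k' - 1)) * d = ?k * (?h * d)"
      proof -
        have "(?k' + 1) * (?h * d) + length (rep hs (?k - ?k' - 1)) * d
             = ((?k' + 1) + (?k - ?k' - 1)) * (?h * d)"
          by (simp add: length_rep algebra_simps)
        also have "(?k' + 1) + (?k - ?k' - 1) = ?k" using kk by simp
        finally show ?thesis .
      qed
      finally have Z: "Lam (lcf L) (rep hs ?k) (pder n \<delta>' f) \<in> Sp n f (Dg n (?k * (?h * d))) (Box n L hs)" .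
      have Z2: "Lam (lcf L) hs' (Lam (lcf L) (rep hs ?k) (pder n \<delta>' f))
          \<in> Sp n f (Dg n (?k * (?h * d) + length hs' * d)) (Box n L hs)"
        by (rule LamSp[OF shs' Z])
      have Z3: "xmon \<beta> (Lam (lcf L) hs' (Lam (lcf L) (rep hs ?k) (pder n \<delta>' f)))
          \<in> Sp n f (Dg n (d + (?k * (?h * d) + length hs' * d))) (Box n L hs)"
        by (rule Sp_xmon[OF _ Z2]) (rule Dg_add[OF b])
      have arith_eq: "d + (?k * (?h * d) + length hs' * d) = (?k + 1) * (?h * d)"
      proof -
        obtain h0 where h0: "?h = Suc h0" using hpos by (cases ?h) auto
        show ?thesis using lhs' by (simp add: h0 algebra_simps)
      qed
      have Z4: "xmon \<beta> (Lam (lcf L) hs' (Lam (lcf L) (rep hs ?k) (pder n \<delta>' f)))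
          \<in> Sp n f (Dg n ((?k + 1) * (?h * d))) (Box n L hs)" using Z3 unfolding arith_eq .
      have "Lam (lcf L) (rep hs ?k) (Lam (lcf L) hs' (xmon \<beta> (pder n \<delta>' f)))
          = xmon \<beta> (Lam (lcf L) hs' (Lam (lcf L) (rep hs ?k) (pder n \<delta>' f)))"
        by (simp add: Lam_xmon Lam_comm[of _ "rep hs ?k"])
      then show "Lam (lcf L) (rep hs ?k) (Lam (lcf L) hs' (xmon \<beta> (pder n \<delta>' f)))
          \<in> Sp n f (Dg n ((?k + 1) * (?h * d))) (Box n L hs)" using Z4 by simp
    qed
    then show ?thesis using eq by simp
  qed
qed


definition AJ :: "nat \<Rightarrow> nat \<Rightarrow> (nat \<Rightarrow> nat) set" where
  "AJ n J = {\<beta> \<in> expvecs n. (\<forall>v. 2 \<le> v \<longrightarrow> \<beta> v = 0) \<and> \<beta> 0 \<le> J \<and> \<beta> 1 \<le> J}"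

definition GH :: "nat \<Rightarrow> nat list \<Rightarrow> nat \<Rightarrow> (nat \<Rightarrow> nat) set" where
  "GH n hs G = {\<delta> \<in> SuppH n hs. mdeg n \<delta> \<le> G}"

definition Bset :: "nat \<Rightarrow> nat \<Rightarrow> nat \<Rightarrow> (nat \<Rightarrow> nat) set" where
  "Bset n X Z = {\<beta> \<in> expvecs n. \<beta> 0 \<le> X \<and> \<beta> 1 \<le> X \<and> (\<forall>v. 2 \<le> v \<longrightarrow> \<beta> v \<le> Z)}"

lemma mdeg_uv: "j < n \<Longrightarrow> mdeg n (uv j) = 1"
proof -
  assume j: "j < n"
  have "mdeg n (uv j) = (\<Sum>v\<in>{..<n}. if v = j then 1 else 0)" by (simp add: mdeg_def uv_def)
  also have "\<dots> = 1" using j by (simp add: sum.delta)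
  finally show ?thesis .
qed

lemma upd_uv: "\<delta>(j := \<delta> j + 1) = \<delta> + uv j"
  by (auto simp: uv_def fun_eq_iff)

lemma uv_expvecs: "j < n \<Longrightarrow> uv j \<in> expvecs n"
  by (auto simp: uv_def expvecs_def)

lemma GH_incr:
  assumes "j \<in> set hs" "j < n" "\<delta> \<in> GH n hs G"
  shows "\<delta>(j := \<delta> j + 1) \<in> GH n hs (G + 1)"
proof -
  have "\<delta>(j := \<delta> j + 1) \<in> expvecs n" using assms(2,3) by (auto simp: GH_def SuppH_def expvecs_def)
  moreover have "mdeg n (\<delta>(j := \<delta> j + 1)) = mdeg n \<delta> + 1"
    unfolding upd_uv mdeg_add mdeg_uv[OF assms(2)] ..
  ultimately show ?thesis using assms by (auto simp: GH_def SuppH_def)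
qed

lemma GH_mono: "G \<le> G' \<Longrightarrow> GH n hs G \<subseteq> GH n hs G'"
  by (auto simp: GH_def)

lemma AJ_dec: "\<beta> \<in> AJ n J \<Longrightarrow> \<beta>(j := \<beta> j - 1) \<in> AJ n J"
proof -
  assume b: "\<beta> \<in> AJ n J"
  have le: "\<beta>(j := \<beta> j - 1) \<le> \<beta>" by (simp add: le_fun_def)
  have "\<beta>(j := \<beta> j - 1) \<in> expvecs n" using expvecs_le[OF _ le] b by (simp add: AJ_def)
  then show ?thesis using b le_funD[OF le] unfolding AJ_def by (auto intro: order_trans)
qed

lemma AJ_mono: "J \<le> J' \<Longrightarrow> AJ n J \<subseteq> AJ n J'"
  by (auto simp: AJ_def)

lemma Top_Sp:
  fixes f :: "(nat \<Rightarrow> nat) \<Rightarrow> 'a::field"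
  assumes n: "2 \<le> n" and hs: "0 \<in> set hs" "1 \<in> set hs"
    and g: "g \<in> Sp n f (AJ n J) (GH n hs G)"
  shows "Top g \<in> Sp n f (AJ n (J + 1)) (GH n hs (G + 1))"
proof -
  have dv: "dvar j g \<in> Sp n f (AJ n J) (GH n hs (G + 1))" if "j \<in> set hs" "j < n" for j
  proof (rule Sp_dvar[OF that(2) _ _ g])
    fix \<beta> :: "nat \<Rightarrow> nat" assume "\<beta> \<in> AJ n J"
    then show "\<beta> \<in> AJ n J \<and> \<beta>(j := \<beta> j - 1) \<in> AJ n J" using AJ_dec by blast
  next
    fix \<delta> assume "\<delta> \<in> GH n hs G"
    then show "\<delta> \<in> GH n hs (G + 1) \<and> \<delta>(j := \<delta> j + 1) \<in> GH n hs (G + 1)"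
    proof -
      have "GH n hs G \<subseteq> GH n hs (G + 1)" by (rule GH_mono) simp
      then show ?thesis using GH_incr[OF that \<open>\<delta> \<in> GH n hs G\<close>] \<open>\<delta> \<in> GH n hs G\<close> by blast
    qed
  qed
  have xm: "xmon (uv j) x \<in> Sp n f (AJ n (J + 1)) (GH n hs (G + 1))"
    if "j < 2" "x \<in> Sp n f (AJ n J) (GH n hs (G + 1))" for j x
  proof (rule Sp_xmon[OF _ that(2)])
    fix \<beta> assume "\<beta> \<in> AJ n J"
    then show "uv j + \<beta> \<in> AJ n (J + 1)"
      using that(1) n uv_expvecs[of j n] by (auto simp: AJ_def uv_def expvecs_def)
  qed
  show ?thesis unfolding Top_eq
    using n hs by (intro Sp_diff xm dv) auto
qed

lemma Top_pow_Sp: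
  fixes f :: "(nat \<Rightarrow> nat) \<Rightarrow> 'a::field"
  assumes n: "2 \<le> n" and hs: "0 \<in> set hs" "1 \<in> set hs"
    and g: "g \<in> Sp n f (AJ n 0) (GH n hs G)"
  shows "(Top ^^ j) g \<in> Sp n f (AJ n j) (GH n hs (G + j))"
proof (induction j)
  case 0 then show ?case using g by simp
next
  case (Suc j)
  then show ?case using Top_Sp[OF n hs Suc] by simp
qed

lemma D12_pow: "(D12 ^^ l) g = pder n ((\<lambda>_. 0)(0 := l, 1 := l)) (g :: (nat \<Rightarrow> nat) \<Rightarrow> 'a::field)"
  if "2 \<le> n"
proof (induction l)
  case 0 then show ?case by (simp add: pder_zero fun_upd_idem_iff)
next
  case (Suc l)
  have "(D12 ^^ Suc l) g = dvar 0 (dvar 1 (pder n ((\<lambda>_. 0)(0 := l, 1 := l)) g))"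
    by (simp only: funpow.simps(2) comp_apply Suc D12_def)
  also have "\<dots> = pder n ((((\<lambda>_. 0)(0 := l, 1 := l))(1 := l + 1))(0 := l + 1)) g"
    using that by (simp add: dvar_pder)
  also have "(((\<lambda>_. 0::nat)(0 := l, 1 := l))(1 := l + 1))(0 := l + 1) = (\<lambda>_. 0)(0 := Suc l, 1 := Suc l)"
    by (auto simp: fun_eq_iff)
  finally show ?case .
qed

lemma pder_in_Sp:
  "\<delta> \<in> \<Gamma> \<Longrightarrow> pder n \<delta> f \<in> Sp n f (AJ n 0) \<Gamma>"
proof -
  assume "\<delta> \<in> \<Gamma>"
  moreover have "(\<lambda>_. 0) \<in> AJ n 0" by (simp add: AJ_def expvecs_def)
  ultimately show ?thesis using gen_in_Sp[of "\<lambda>_. 0" "AJ n 0" \<delta> \<Gamma> n f] by (simp add: xmon_0')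
qed

lemma xvv_pow: "((xvar 0 \<circ> xvar 1) ^^ i) g = xmon (\<lambda>v. if v < 2 then i else 0) g"
proof (induction i)
  case 0 then show ?case by (simp add: xmon_0')
next
  case (Suc i)
  have "((xvar 0 \<circ> xvar 1) ^^ Suc i) g = xmon (uv 0 + (uv 1 + (\<lambda>v. if v < 2 then i else 0))) g"
  proof -
    have "((xvar 0 \<circ> xvar 1) ^^ Suc i) g = xvar 0 (xvar 1 (((xvar 0 \<circ> xvar 1) ^^ i) g))"
      by (simp only: funpow.simps(2) comp_apply)
    also have "\<dots> = xmon (uv 0 + (uv 1 + (\<lambda>v. if v < 2 then i else 0))) g"
      by (subst Suc.IH) (simp only: xvar_xmon xmon_xmon)
    finally show ?thesis .
  qed
  also have "uv 0 + (uv 1 + (\<lambda>v. if v < 2 then i else 0)) = (\<lambda>v. if v < 2 then Suc i else 0)"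
    by (auto simp: uv_def fun_eq_iff)
  finally show ?case .
qed

lemma basis_act_eq:
  "basis_act D (i, k, j, l) g = xmon ((\<lambda>v. if v < 2 then i else 0) + k) ((Top ^^ j) ((D ^^ l) g))"
  unfolding basis_act_def prod.case xvv_pow xmon_xmon ..

lemma Q_Sp:
  fixes f :: "(nat \<Rightarrow> nat) \<Rightarrow> 'a::field"
  assumes su: "dsetup n f L d" and hs: "set hs \<subseteq> {..<n}"
    and g: "g \<in> Sp n f (AJ n J) (GH n hs Gm)"
  shows "Lam (lcf L) (rep hs (Gm + 1)) g \<in> Sp n f (Bset n (J + (Gm + 1) * (length hs * d)) ((Gm + 1) * (length hs * d))) (Box n L hs)"
proof (rule Sp_lin[OF lin_Lam _ g])
  fix \<beta> \<delta> assume b: "\<beta> \<in> AJ n J" and dl: "\<delta> \<in> GH n hs Gm"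
  let ?Y = "(Gm + 1) * (length hs * d)"
  let ?k = "mdeg n \<delta>"
  have kG: "?k \<le> Gm" and S: "\<delta> \<in> SuppH n hs" using dl by (auto simp: GH_def)
  have lcp: "\<And>i. i \<in> set (rep hs (Gm - ?k)) \<Longrightarrow> is_poly n (lcf L i) \<and> tdeg n (lcf L i) \<le> d"
    using setup_lcf[OF su] hs set_rep by blast
  have "rep hs (Gm + 1) = rep hs ((Gm - ?k) + (?k + 1))" using kG by (simp add: algebra_simps)
  also have "\<dots> = rep hs (Gm - ?k) @ rep hs (?k + 1)" by (rule rep_add)
  finally have r: "rep hs (Gm + 1) = rep hs (Gm - ?k) @ rep hs (?k + 1)" .
  have "Lam (lcf L) (rep hs (Gm + 1)) (pder n \<delta> f)
      = Lam (lcf L) (rep hs (Gm - ?k)) (Lam (lcf L) (rep hs (?k + 1)) (pder n \<delta> f))"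
    unfolding r by (rule Lam_append)
  also have "\<dots> \<in> Sp n f (Dg n ((?k + 1) * (length hs * d) + length (rep hs (Gm - ?k)) * d)) (Box n L hs)"
    by (rule Lam_Sp[OF lcp reduce[OF su hs S]])
  also have "(?k + 1) * (length hs * d) + length (rep hs (Gm - ?k)) * d = ?Y"
  proof -
    have "(?k + 1) * (length hs * d) + length (rep hs (Gm - ?k)) * d = ((?k + 1) + (Gm - ?k)) * (length hs * d)"
      by (simp add: length_rep algebra_simps)
    also have "(?k + 1) + (Gm - ?k) = Gm + 1" using kG by simp
    finally show ?thesis .
  qed
  finally have Z: "Lam (lcf L) (rep hs (Gm + 1)) (pder n \<delta> f) \<in> Sp n f (Dg n ?Y) (Box n L hs)" .
  have "xmon \<beta> (Lam (lcf L) (rep hs (Gm + 1)) (pder n \<delta> f)) \<in> Sp n f (Bset n (J + ?Y) ?Y) (Box n L hs)"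
  proof (rule Sp_xmon[OF _ Z])
    fix \<gamma> assume c: "\<gamma> \<in> Dg n ?Y"
    then have cE: "\<gamma> \<in> expvecs n" and cv: "\<And>v. \<gamma> v \<le> ?Y"
      using le_mdeg[of \<gamma> n] by (auto simp: Dg_def intro: order_trans)
    show "\<beta> + \<gamma> \<in> Bset n (J + ?Y) ?Y"
      using b cE cv[of 0] cv[of 1] cv by (auto simp: Bset_def AJ_def expvecs_def add_mono)
  qed
  then show "Lam (lcf L) (rep hs (Gm + 1)) (xmon \<beta> (pder n \<delta> f)) \<in> Sp n f (Bset n (J + ?Y) ?Y) (Box n L hs)"
    by (simp add: Lam_xmon)
qed


lemma pow_ratio_bound:
  fixes P Y m :: nat
  assumes P: "P > 0" and hP: "2 * m * Y \<le> P"
  shows "(P + Y) ^ m \<le> 2 * P ^ m"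
proof -
  have Pr: "real P > 0" using P by simp
  have x: "real Y / real P \<ge> 0" by simp
  have "1 + real Y / real P \<le> exp (real Y / real P)" by (rule exp_ge_add_one_self)
  then have "(1 + real Y / real P) ^ m \<le> exp (real Y / real P) ^ m"
    by (intro power_mono) (use x in auto)
  also have "\<dots> = exp (real m * (real Y / real P))" by (rule exp_of_nat_mult[symmetric])
  also have "\<dots> \<le> 2"
  proof -
    have "real m * (real Y / real P) = real (m * Y) / real P" by simp
    also have "\<dots> \<le> 1 / 2"
    proof -
      have "real (2 * m * Y) \<le> real P" using hP by (simp only: of_nat_le_iff)
      then show ?thesis using Pr by (simp add: divide_le_eq)
    qed
    finally have "norm (real m * (real Y / real P)) \<le> 1/2" by simp
    from exp_bound_half[OF this] show ?thesis by simp
  qed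
  finally have b: "(1 + real Y / real P) ^ m \<le> 2" .
  have e: "real P + real Y = real P * (1 + real Y / real P)" using Pr by (simp add: field_simps)
  have "real ((P + Y) ^ m) = (real P + real Y) ^ m" by simp
  also have "\<dots> = real P ^ m * (1 + real Y / real P) ^ m" unfolding e by (rule power_mult_distrib)
  also have "\<dots> \<le> real P ^ m * 2" using b by (intro mult_left_mono) auto
  also have "\<dots> = real (2 * P ^ m)" by simp
  finally show ?thesis by (simp only: of_nat_le_iff)
qed

lemma exists_dep:
  fixes w :: "'t \<Rightarrow> ((nat \<Rightarrow> nat) \<Rightarrow> 'a::field)"
  assumes fI: "finite I" and fS: "finite S" and cI: "card S < card I"
    and sp: "\<And>t. t \<in> I \<Longrightarrow> w t \<in> fs.span S"
  shows "\<exists>c. (\<forall>t. c t \<noteq> 0 \<longrightarrow> t \<in> I) \<and> c \<noteq> (\<lambda>_. 0) \<and> (\<Sum>t\<in>I. sc (c t) (w t)) = 0"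
proof (cases "inj_on w I")
  case True
  have cw: "card (w ` I) = card I" using card_image[OF True] .
  have "\<not> fs.independent (w ` I)"
  proof
    assume "fs.independent (w ` I)"
    then have "card (w ` I) \<le> card S" using fs.independent_span_bound[OF fS] sp by blast
    then show False using cw cI by simp
  qed
  then obtain T U where T: "finite T" "T \<subseteq> w ` I" "(\<Sum>v\<in>T. sc (U v) v) = 0" "\<exists>v\<in>T. U v \<noteq> 0"
    unfolding fs.dependent_explicit by blast
  define c where "c t = (if t \<in> I \<and> w t \<in> T then U (w t) else 0)" for t
  define I' where "I' = {t \<in> I. w t \<in> T}"
  have im: "w ` I' = T" using T(2) by (auto simp: I'_def)
  have inj': "inj_on w I'" using True by (rule inj_on_subset) (auto simp: I'_def)
  have "(\<Sum>t\<in>I. sc (c t) (w t)) = (\<Sum>t\<in>I'. sc (c t) (w t))"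
    using fI by (intro sum.mono_neutral_right) (auto simp: I'_def c_def)
  also have "\<dots> = (\<Sum>t\<in>I'. sc (U (w t)) (w t))" by (intro sum.cong) (auto simp: I'_def c_def)
  also have "\<dots> = (\<Sum>v\<in>T. sc (U v) v)" unfolding im[symmetric] by (rule sum.reindex[OF inj', symmetric, unfolded comp_def])
  also have "\<dots> = 0" by (rule T(3))
  finally have s: "(\<Sum>t\<in>I. sc (c t) (w t)) = 0" .
  obtain v where v: "v \<in> T" "U v \<noteq> 0" using T(4) by blast
  then obtain t where t: "t \<in> I" "w t = v" using T(2) by auto
  have "c t \<noteq> 0" using t v by (simp add: c_def)
  then have "c \<noteq> (\<lambda>_. 0)" by (auto simp: fun_eq_iff)
  moreover have "\<forall>t. c t \<noteq> 0 \<longrightarrow> t \<in> I" by (simp add: c_def)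
  ultimately show ?thesis using s by blast
next
  case False
  then obtain t1 t2 where t: "t1 \<in> I" "t2 \<in> I" "t1 \<noteq> t2" "w t1 = w t2" by (auto simp: inj_on_def)
  define c where "c t = (if t = t1 then 1 else if t = t2 then -1 else (0::'a))" for t
  have "(\<Sum>t\<in>I. sc (c t) (w t)) = (\<Sum>t\<in>{t1, t2}. sc (c t) (w t))"
    using fI t by (intro sum.mono_neutral_right) (auto simp: c_def)
  also have "\<dots> = 0" using t by (simp add: c_def sc_def fun_eq_iff)
  finally have "(\<Sum>t\<in>I. sc (c t) (w t)) = 0" .
  moreover have "c \<noteq> (\<lambda>_. 0)" by (auto simp: c_def fun_eq_iff)
  moreover have "\<forall>t. c t \<noteq> 0 \<longrightarrow> t \<in> I" using t by (simp add: c_def)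
  ultimately show ?thesis by blast
qed

lemma card_Bset:
  assumes n: "2 \<le> n"
  shows "finite (Bset n X Z) \<and> card (Bset n X Z) \<le> (X + 1) ^ 2 * (Z + 1) ^ (n - 2)"
proof -
  define T where "T = (\<lambda>v::nat. if v < 2 then {..X} else {..Z})"
  define \<rho> where "\<rho> = (\<lambda>\<beta>::nat \<Rightarrow> nat. restrict \<beta> {..<n})"
  have inj: "inj_on \<rho> (Bset n X Z)"
  proof (rule inj_onI)
    fix x y assume x: "x \<in> Bset n X Z" and y: "y \<in> Bset n X Z" and e: "\<rho> x = \<rho> y"
    show "x = y"
    proof (rule ext)
      fix v show "x v = y v"
      proof (cases "v < n")
        case True then show ?thesis using fun_cong[OF e, of v] by (simp add: \<rho>_def)
      next
        case False then show ?thesis using x y by (simp add: Bset_def expvecs_def)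
      qed
    qed
  qed
  have sub: "\<rho> ` Bset n X Z \<subseteq> PiE {..<n} T"
    by (auto simp: \<rho>_def Bset_def T_def PiE_def Pi_def) (metis less_2_cases not_less)+
  have fP: "finite (PiE {..<n} T)" by (intro finite_PiE) (auto simp: T_def)
  have "card (PiE {..<n} T) = (\<Prod>v\<in>{..<n}. card (T v))" by (rule card_PiE) simp
  also have "\<dots> = (\<Prod>v\<in>{..<2}. card (T v)) * (\<Prod>v\<in>{2..<n}. card (T v))"
  proof -
    have "{..<n} = {..<2} \<union> {2..<n}" using n by auto
    moreover have "(\<Prod>v\<in>{..<2} \<union> {2..<n}. card (T v)) = (\<Prod>v\<in>{..<2}. card (T v)) * (\<Prod>v\<in>{2..<n}. card (T v))"
      by (rule prod.union_disjoint) auto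
    ultimately show ?thesis by simp
  qed
  also have "\<dots> = (X + 1) ^ 2 * (Z + 1) ^ (n - 2)"
    by (simp add: T_def lessThan_nat_numeral power2_eq_square)
  finally have cP: "card (PiE {..<n} T) = (X + 1) ^ 2 * (Z + 1) ^ (n - 2)" .
  have "finite (\<rho> ` Bset n X Z)" using finite_subset[OF sub fP] .
  then have fin: "finite (Bset n X Z)" using finite_imageD[OF _ inj] by blast
  have "card (Bset n X Z) = card (\<rho> ` Bset n X Z)" using card_image[OF inj] by simp
  also have "\<dots> \<le> card (PiE {..<n} T)" by (rule card_mono[OF fP sub])
  finally show ?thesis using fin cP by simp
qed

lemma card_Box:
  assumes R: "R \<ge> 1" and o: "\<And>i. i \<in> set hs \<Longrightarrow> op_order (L i) \<le> R"
  shows "finite (Box n L hs) \<and> card (Box n L hs) \<le> R ^ length hs"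
proof -
  define \<rho> where "\<rho> = (\<lambda>\<delta>::nat \<Rightarrow> nat. restrict \<delta> (set hs))"
  have inj: "inj_on \<rho> (Box n L hs)"
  proof (rule inj_onI)
    fix x y assume x: "x \<in> Box n L hs" and y: "y \<in> Box n L hs" and e: "\<rho> x = \<rho> y"
    show "x = y"
    proof (rule ext)
      fix v show "x v = y v"
      proof (cases "v \<in> set hs")
        case True then show ?thesis using fun_cong[OF e, of v] by (simp add: \<rho>_def)
      next
        case False then show ?thesis using x y by (simp add: Box_def)
      qed
    qed
  qed
  have sub: "\<rho> ` Box n L hs \<subseteq> PiE (set hs) (\<lambda>_. {..<R})"
  proof
    fix z assume "z \<in> \<rho> ` Box n L hs"
    then obtain \<delta> where d: "\<delta> \<in> Box n L hs" "z = \<rho> \<delta>" by auto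
    have "\<delta> i < R" if "i \<in> set hs" for i using d(1) o[OF that] that by (auto simp: Box_def)
    then show "z \<in> PiE (set hs) (\<lambda>_. {..<R})" using d(2) by (auto simp: \<rho>_def)
  qed
  have fP: "finite (PiE (set hs) (\<lambda>_. {..<R}))" by (intro finite_PiE) auto
  have cP: "card (PiE (set hs) (\<lambda>_. {..<R})) = R ^ card (set hs)" by (simp add: card_PiE)
  have "finite (\<rho> ` Box n L hs)" using finite_subset[OF sub fP] .
  then have fin: "finite (Box n L hs)" using finite_imageD[OF _ inj] by blast
  have "card (Box n L hs) = card (\<rho> ` Box n L hs)" using card_image[OF inj] by simp
  also have "\<dots> \<le> R ^ card (set hs)" using card_mono[OF fP sub] cP by simp
  also have "\<dots> \<le> R ^ length hs" using R by (intro power_increasing card_length) auto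
  finally show ?thesis using fin by simp
qed

lemma card_gen:
  assumes "finite A" "finite \<Gamma>"
  shows "finite (gen n f A \<Gamma>) \<and> card (gen n f A \<Gamma>) \<le> card A * card \<Gamma>"
proof -
  have e: "gen n f A \<Gamma> = (\<lambda>(\<beta>, \<delta>). xmon \<beta> (pder n \<delta> f)) ` (A \<times> \<Gamma>)"
    by (auto simp: gen_def)
  show ?thesis unfolding e using assms
    by (metis card_cartesian_product card_image_le finite_SigmaI finite_imageI)
qed

definition Kset :: "nat \<Rightarrow> nat \<Rightarrow> (nat \<Rightarrow> nat) set" where
  "Kset n B = {k \<in> expvecs n. k 0 = 0 \<and> k 1 = 0 \<and> (\<forall>v. k v \<le> B)}"

lemma card_Kset:
  shows "finite (Kset n B) \<and> (B + 1) ^ (n - 2) \<le> card (Kset n B)"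
proof -
  have sub: "Kset n B \<subseteq> {f. \<forall>x. (x \<in> {..<n} \<longrightarrow> f x \<in> {..B}) \<and> (x \<notin> {..<n} \<longrightarrow> f x = 0)}"
    by (auto simp: Kset_def expvecs_def)
  have fin: "finite (Kset n B)"
    by (rule finite_subset[OF sub]) (intro finite_set_of_finite_funs; simp)
  define e where "e = (\<lambda>g::nat \<Rightarrow> nat. \<lambda>v. if v \<in> {2..<n} then g v else 0)"
  have inj: "inj_on e (PiE {2..<n} (\<lambda>_. {..B}))"
  proof (rule inj_onI)
    fix x y assume x: "x \<in> PiE {2..<n} (\<lambda>_. {..B})" and y: "y \<in> PiE {2..<n} (\<lambda>_. {..B})" and h: "e x = e y"
    show "x = y"
    proof (rule PiE_ext[OF x y])
      fix v assume "v \<in> {2..<n}" then show "x v = y v" using fun_cong[OF h, of v] by (simp add: e_def)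
    qed
  qed
  have im: "e ` PiE {2..<n} (\<lambda>_. {..B}) \<subseteq> Kset n B"
    by (auto simp: e_def Kset_def expvecs_def PiE_def Pi_def)
  have "(B + 1) ^ (n - 2) = card (PiE {2..<n} (\<lambda>_. {..B::nat}))" by (simp add: card_PiE)
  also have "\<dots> \<le> card (Kset n B)" by (rule card_inj_on_le[OF inj im fin])
  finally show ?thesis using fin by simp
qed


lemma arith1:
  fixes b h d :: nat assumes "h \<le> 3"
  shows "b + 1 + (3 * b + 1) * (h * d) \<le> 9 * (b + 1) * (d + 1)"
proof -
  have "(3 * b + 1) * (h * d) \<le> (3 * b + 3) * (3 * d)" using assms by (intro mult_mono) auto
  then show ?thesis by (simp add: algebra_simps)
qed

lemma main_case:
  fixes f :: "(nat \<Rightarrow> nat) \<Rightarrow> 'a::field"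
    and D :: "((nat \<Rightarrow> nat) \<Rightarrow> 'a) \<Rightarrow> ((nat \<Rightarrow> nat) \<Rightarrow> 'a)"
  assumes n: "2 \<le> n" and su: "dsetup n f L d"
    and hs: "set hs \<subseteq> {..<n}" "0 \<in> set hs" "1 \<in> set hs" "length hs \<le> 3"
    and ord: "\<And>i. i \<in> set hs \<Longrightarrow> op_order (L i) \<le> r"
    and Dl: "\<And>l. (D ^^ l) f \<in> Sp n f (AJ n 0) (GH n hs (2 * l))"
  shows "\<exists>c. sub_coeffs n c \<and> c \<noteq> (\<lambda>_. 0) \<and> (\<forall>m\<in>expvecs n. sub_apply D c f m = 0) \<and>
     sub_bounds n c (729 * (r + 1) ^ length hs * (d + 1) ^ 2) (1458 * n ^ 2 * (r + 1) ^ length hs * (d + 1) ^ 2)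
       (160 * (r + 1) ^ length hs * (d + 1))"
proof -
  define h where "h = length hs"
  define P where "P = (r + 1) ^ h"
  define Dd where "Dd = d + 1"
  define b where "b = 80 * P * Dd"
  define Gm where "Gm = 3 * b"
  define Y where "Y = (Gm + 1) * (h * d)"
  define a where "a = b + Y"
  define m where "m = n - 2"
  define B where "B = 2 * m * Y"
  define X where "X = a + b + Y"
  define Z where "Z = B + Y"
  define I where "I = {..a} \<times> Kset n B \<times> {..b} \<times> {..b}"
  define Q where "Q = Lam (lcf L) (rep hs (Gm + 1))"
  define w where "w t = Q (basis_act D t f)" for t
  define S where "S = gen n f (Bset n X Z) (Box n L hs)"
  have P1: "P \<ge> 1" and D1: "Dd \<ge> 1" by (simp_all add: P_def Dd_def)
  have b1: "b \<ge> 1" using P1 D1 by (simp add: b_def)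
  have wsp: "w t \<in> fs.span S" if t: "t \<in> I" for t
  proof -
    obtain i k j l where tt: "t = (i, k, j, l)" by (cases t) auto
    have i: "i \<le> a" and k: "k \<in> Kset n B" and j: "j \<le> b" and l: "l \<le> b" using t tt by (auto simp: I_def)
    have "(Top ^^ j) ((D ^^ l) f) \<in> Sp n f (AJ n j) (GH n hs (2 * l + j))"
      by (rule Top_pow_Sp[OF n hs(2,3) Dl])
    then have T1: "(Top ^^ j) ((D ^^ l) f) \<in> Sp n f (AJ n b) (GH n hs Gm)"
      by (rule Sp_mono[rotated 2]) (use j l in \<open>auto intro!: AJ_mono GH_mono simp: Gm_def\<close>)
    have T2: "Q ((Top ^^ j) ((D ^^ l) f)) \<in> Sp n f (Bset n (b + Y) Y) (Box n L hs)"
      unfolding Q_def Y_def h_def by (rule Q_Sp[OF su hs(1) T1])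
    define \<gamma> where "\<gamma> = (\<lambda>v. if v < 2 then i else 0) + k"
    have T3: "xmon \<gamma> (Q ((Top ^^ j) ((D ^^ l) f))) \<in> Sp n f (Bset n X Z) (Box n L hs)"
    proof (rule Sp_xmon[OF _ T2])
      fix \<beta> assume "\<beta> \<in> Bset n (b + Y) Y"
      assume bb: "\<beta> \<in> Bset n (b + Y) Y"
      have kv: "\<And>v. k v \<le> B" using k by (simp add: Kset_def)
      have "(\<gamma> + \<beta>) v \<le> B + Y" if "2 \<le> v" for v
        using add_mono[OF kv[of v], of "\<beta> v" Y] bb that by (simp add: \<gamma>_def Bset_def)
      then show "\<gamma> + \<beta> \<in> Bset n X Z"
        using k i n bb by (auto simp: Bset_def Kset_def expvecs_def \<gamma>_def X_def Z_def)
    qed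
    have "w t = xmon \<gamma> (Q ((Top ^^ j) ((D ^^ l) f)))"
      by (simp add: w_def tt basis_act_eq \<gamma>_def Q_def Lam_xmon)
    then show ?thesis using T3 by (simp add: Sp_def S_def)
  qed
  have fB: "finite (Bset n X Z)" and cB: "card (Bset n X Z) \<le> (X + 1) ^ 2 * (Z + 1) ^ m"
    using card_Bset[OF n, of X Z] by (simp_all add: m_def)
  have fX: "finite (Box n L hs)" and cX: "card (Box n L hs) \<le> P"
  proof -
    have "\<And>i. i \<in> set hs \<Longrightarrow> op_order (L i) \<le> r + 1" using ord le_SucI by fastforce
    then have "finite (Box n L hs) \<and> card (Box n L hs) \<le> (r + 1) ^ length hs"
      by (intro card_Box) auto
    then show "finite (Box n L hs)" "card (Box n L hs) \<le> P" by (auto simp: P_def h_def)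
  qed
  have fS: "finite S" and cS: "card S \<le> (X + 1) ^ 2 * (Z + 1) ^ m * P"
  proof -
    have "finite S \<and> card S \<le> card (Bset n X Z) * card (Box n L hs)"
      unfolding S_def by (rule card_gen[OF fB fX])
    moreover have "card (Bset n X Z) * card (Box n L hs) \<le> (X + 1) ^ 2 * (Z + 1) ^ m * P"
      using cB cX by (rule mult_mono) auto
    ultimately show "finite S" "card S \<le> (X + 1) ^ 2 * (Z + 1) ^ m * P" by auto
  qed
  have fK: "finite (Kset n B)" and cK: "(B + 1) ^ m \<le> card (Kset n B)"
    using card_Kset[of n B] by (simp_all add: m_def)
  have fI: "finite I" using fK by (simp add: I_def)
  have cI: "card I = (a + 1) * (card (Kset n B) * ((b + 1) * (b + 1)))"
    by (simp add: I_def card_cartesian_product)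
  have key: "8 * (a + 1) * P < (b + 1) ^ 2"
  proof -
    have "a + 1 \<le> 9 * (b + 1) * Dd"
      using arith1[of h b d] hs(4) by (simp add: a_def Y_def Gm_def Dd_def h_def)
    then have "(a + 1) * (8 * P) \<le> (9 * (b + 1) * Dd) * (8 * P)" by (rule mult_le_mono1)
    then have "8 * (a + 1) * P \<le> 72 * (b + 1) * (P * Dd)" by (simp add: algebra_simps)
    also have "\<dots> < (b + 1) * (b + 1)"
    proof -
      have "72 * (P * Dd) < b + 1" by (simp add: b_def)
      then have "(b + 1) * (72 * (P * Dd)) < (b + 1) * (b + 1)" by (intro mult_strict_left_mono) auto
      then show ?thesis by (simp add: algebra_simps)
    qed
    finally show ?thesis by (simp add: power2_eq_square)
  qed
  have ZB: "(Z + 1) ^ m \<le> 2 * (B + 1) ^ m"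
    using pow_ratio_bound[of "B + 1" m Y] by (simp add: Z_def B_def algebra_simps)
  have XA: "(X + 1) ^ 2 \<le> 4 * (a + 1) ^ 2"
  proof -
    have "X + 1 \<le> 2 * (a + 1)" by (simp add: X_def a_def)
    then have le: "(X + 1) ^ 2 \<le> (2 * (a + 1)) ^ 2" by (rule power_mono) simp
    have e: "(2 * (a + 1)) ^ 2 = 4 * (a + 1) ^ 2" by (simp add: power2_eq_square)
    show ?thesis using le e by linarith
  qed
  have "card S \<le> (X + 1) ^ 2 * (Z + 1) ^ m * P" by (rule cS)
  also have "\<dots> \<le> (4 * (a + 1) ^ 2) * (2 * (B + 1) ^ m) * P"
    using XA ZB by (intro mult_mono) auto
  also have "\<dots> = ((a + 1) * (B + 1) ^ m) * (8 * (a + 1) * P)" by (simp add: power2_eq_square algebra_simps)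
  also have "\<dots> < ((a + 1) * (B + 1) ^ m) * ((b + 1) ^ 2)"
    using key by (intro mult_strict_left_mono) auto
  also have "\<dots> = (a + 1) * ((B + 1) ^ m * ((b + 1) * (b + 1)))" by (simp only: power2_eq_square mult.assoc)
  also have "\<dots> \<le> (a + 1) * (card (Kset n B) * ((b + 1) * (b + 1)))"
    using cK by (intro mult_le_mono2 mult_le_mono1)
  also have "\<dots> = card I" by (simp add: cI)
  finally have cSI: "card S < card I" .
  obtain c where c: "\<forall>t. c t \<noteq> 0 \<longrightarrow> t \<in> I" "c \<noteq> (\<lambda>_. 0)" "(\<Sum>t\<in>I. sc (c t) (w t)) = 0"
    using exists_dep[OF fI fS cSI, of w] wsp by blast
  have supp: "{t. c t \<noteq> 0} \<subseteq> I" using c(1) by auto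
  have sc1: "sub_coeffs n c"
    unfolding sub_coeffs_def using finite_subset[OF supp fI] c(1) by (auto simp: I_def Kset_def)
  have sb: "sub_bounds n c (729 * (r + 1) ^ length hs * (d + 1) ^ 2) (1458 * n ^ 2 * (r + 1) ^ length hs * (d + 1) ^ 2)
       (160 * (r + 1) ^ length hs * (d + 1))"
    unfolding sub_bounds_def
  proof (intro allI impI)
    fix i k j l assume nz: "c (i, k, j, l) \<noteq> 0"
    then have t: "(i, k, j, l) \<in> I" using c(1) by blast
    then have i: "i \<le> a" and k: "k \<in> Kset n B" and j: "j \<le> b" and l: "l \<le> b" by (auto simp: I_def)
    have a1: "a \<le> 729 * P * Dd ^ 2"
    proof -
      have "a + 1 \<le> 9 * (b + 1) * Dd"
        using arith1[of h b d] hs(4) by (simp add: a_def Y_def Gm_def Dd_def h_def)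
      moreover have "b + 1 \<le> 81 * P * Dd" using P1 D1 by (simp add: b_def)
      ultimately have "a + 1 \<le> 9 * (81 * P * Dd) * Dd"
        by (meson le_trans mult_le_mono1 mult_le_mono2)
      then show ?thesis by (simp add: power2_eq_square algebra_simps)
    qed
    have "mdeg n k \<le> n * B"
    proof -
      have "mdeg n k \<le> (\<Sum>v<n. B)" unfolding mdeg_def using k by (intro sum_mono) (auto simp: Kset_def)
      then show ?thesis by simp
    qed
    also have "n * B \<le> 2 * n * n * a" unfolding B_def m_def
    proof -
      have "(n - 2) * Y \<le> n * a" by (intro mult_le_mono) (auto simp: a_def)
      then have "n * (2 * (n - 2) * Y) \<le> n * (2 * n * a)" by (intro mult_le_mono2) (simp add: algebra_simps)
      then show "n * (2 * (n - 2) * Y) \<le> 2 * n * n * a" by (simp add: algebra_simps)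
    qed
    also have "\<dots> \<le> 2 * n * n * (729 * P * Dd ^ 2)" using a1 by simp
    finally have kb: "mdeg n k \<le> 1458 * n ^ 2 * P * Dd ^ 2" by (simp add: power2_eq_square algebra_simps)
    show "i \<le> 729 * (r + 1) ^ length hs * (d + 1) ^ 2 \<and>
          mdeg n k \<le> 1458 * n ^ 2 * (r + 1) ^ length hs * (d + 1) ^ 2 \<and>
          j + l \<le> 160 * (r + 1) ^ length hs * (d + 1)"
      using i a1 kb j l by (simp add: P_def Dd_def h_def b_def)
  qed
  have sa: "sub_apply D c f = (\<Sum>t\<in>{t. c t \<noteq> 0}. sc (c t) (basis_act D t f))"
    by (simp add: sub_apply_def fun_eq_iff fun_sum_apply sc_apply)
  have "Q (sub_apply D c f) = (\<Sum>t\<in>{t. c t \<noteq> 0}. sc (c t) (w t))"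
    unfolding sa Q_def w_def by (simp add: lin_sum[OF lin_Lam] lin_sc[OF lin_Lam])
  also have "\<dots> = (\<Sum>t\<in>I. sc (c t) (w t))"
    using fI supp by (intro sum.mono_neutral_left) auto
  also have "\<dots> = 0" by (rule c(3))
  finally have Q0: "Q (sub_apply D c f) = 0" .
  have ann: "\<forall>m\<in>expvecs n. sub_apply D c f m = 0"
  proof (rule Lam_domain)
    fix i assume "i \<in> set (rep hs (Gm + 1))"
    then have "i \<in> set hs" using set_rep by blast
    then have "i < n" using hs(1) by auto
    then show "is_poly n (lcf L i) \<and> lcf L i \<noteq> (\<lambda>_. 0)" using setup_lcf[OF su] by blast
  next
    show "\<forall>m\<in>expvecs n. Lam (lcf L) (rep hs (Gm + 1)) (sub_apply D c f) m = 0"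
      using Q0 by (simp add: Q_def)
  qed
  show ?thesis using sc1 c(2) ann sb by blast
qed


lemma sub_bounds_mono:
  "sub_bounds n c a1 a2 a3 \<Longrightarrow> a1 \<le> b1 \<Longrightarrow> a2 \<le> b2 \<Longrightarrow> a3 \<le> b3 \<Longrightarrow> sub_bounds n c b1 b2 b3"
  unfolding sub_bounds_def by (meson le_trans)

lemma pow_mono_ge1: "(x::nat) \<ge> 1 \<Longrightarrow> p \<le> q \<Longrightarrow> x ^ p \<le> x ^ q"
  by (rule power_increasing)

theorem theorem3p16:
  fixes n :: nat
  assumes "n \<ge> 2"
  shows "\<exists>C :: nat. \<forall>(f :: (nat \<Rightarrow> nat) \<Rightarrow> 'a :: field_char_0)
      (L :: nat \<Rightarrow> nat \<Rightarrow> (nat \<Rightarrow> nat) \<Rightarrow> 'a).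
    is_series n f \<and> dfinite n f \<and>
    (\<forall>i<n. ore_op n (L i) \<and> L i \<noteq> (\<lambda>_ _. 0) \<and> (\<forall>m\<in>expvecs n. apply_ore i (L i) f m = 0))
    \<longrightarrow>
    (let rf = Max ((\<lambda>i. op_order (L i)) ` {..<n});
         df = Max ((\<lambda>i. op_degree n (L i)) ` {..<n})
     in
     (\<exists>c. sub_coeffs n c \<and> c \<noteq> (\<lambda>_. 0) \<and>
          (\<forall>m\<in>expvecs n. sub_apply D12 c f m = 0) \<and>
          sub_bounds n c (C * (df + 1)^2 * (rf + 1)^2) (C * (df + 1)^9 * (rf + 1)^8)
                         (C * (df + 1)^2 * (rf + 1)^2)) \<and>
     (\<forall>h\<in>{2..<n}. \<exists>c. sub_coeffs n c \<and> c \<noteq> (\<lambda>_. 0) \<and>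
          (\<forall>m\<in>expvecs n. sub_apply (dvar h) c f m = 0) \<and>
          sub_bounds n c (C * (df + 1)^2 * (rf + 1)^3) (C * (df + 1)^9 * (rf + 1)^12)
                         (C * (df + 1)^2 * (rf + 1)^3)))"
proof -
  have n: "2 \<le> n" using assms .
  define C :: nat where "C = 2000 * n ^ 2"
  have C1: "729 \<le> C" "1458 * n ^ 2 \<le> C" "160 \<le> C"
  proof -
    have "4 \<le> n ^ 2" using n power_mono[of 2 n 2] by simp
    then show "729 \<le> C" "160 \<le> C" by (simp_all add: C_def)
    show "1458 * n ^ 2 \<le> C" by (simp add: C_def)
  qed
  show ?thesis
  proof (rule exI[of _ C], intro allI impI)
    fix f :: "(nat \<Rightarrow> nat) \<Rightarrow> 'a" and L :: "nat \<Rightarrow> nat \<Rightarrow> (nat \<Rightarrow> nat) \<Rightarrow> 'a"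
    assume H: "is_series n f \<and> dfinite n f \<and>
      (\<forall>i<n. ore_op n (L i) \<and> L i \<noteq> (\<lambda>_ _. 0) \<and> (\<forall>m\<in>expvecs n. apply_ore i (L i) f m = 0))"
    define rf where "rf = Max ((\<lambda>i. op_order (L i)) ` {..<n})"
    define df where "df = Max ((\<lambda>i. op_degree n (L i)) ` {..<n})"
    have ne: "0 \<in> {..<n}" using n by auto
    have ordb: "op_order (L i) \<le> rf" if "i < n" for i
      unfolding rf_def using that by (intro Max_ge) auto
    have degb: "op_degree n (L i) \<le> df" if "i < n" for i
      unfolding df_def using that by (intro Max_ge) auto
    have su: "dsetup n f L df" using H degb by (simp add: dsetup_def)
    let ?R = "rf + 1" and ?Dd = "df + 1"
    have R1: "?R \<ge> 1" and Dd1: "?Dd \<ge> 1" by simp_all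
    have Dl12: "(D12 ^^ l) f \<in> Sp n f (AJ n 0) (GH n [0, 1] (2 * l))" for l
    proof -
      define \<delta> :: "nat \<Rightarrow> nat" where "\<delta> = (\<lambda>_. 0)(0 := l, 1 := l)"
      have dv: "\<delta> v = (if v = 0 then l else 0) + (if v = 1 then l else 0)" for v by (simp add: \<delta>_def)
      have "mdeg n \<delta> = (\<Sum>v<n. (if v = 0 then l else 0)) + (\<Sum>v<n. (if v = 1 then l else 0))"
        unfolding mdeg_def dv by (rule sum.distrib)
      also have "\<dots> = 2 * l" using n by (simp add: sum.delta)
      finally have md: "mdeg n \<delta> = 2 * l" .
      have "\<delta> \<in> GH n [0, 1] (2 * l)"
        using n md by (auto simp: GH_def SuppH_def expvecs_def \<delta>_def)
      then show ?thesis using D12_pow[OF n, of l f] pder_in_Sp by (simp add: \<delta>_def)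
    qed
    obtain c1 where c1: "sub_coeffs n c1" "c1 \<noteq> (\<lambda>_. 0)" "\<forall>m\<in>expvecs n. sub_apply D12 c1 f m = 0"
      "sub_bounds n c1 (729 * ?R ^ 2 * ?Dd ^ 2) (1458 * n ^ 2 * ?R ^ 2 * ?Dd ^ 2) (160 * ?R ^ 2 * ?Dd)"
    proof -
      have p1: "set [0::nat, 1] \<subseteq> {..<n}" using n by auto
      have p5: "\<And>i. i \<in> set [0::nat, 1] \<Longrightarrow> op_order (L i) \<le> rf" using n ordb by auto
      have mc: "\<exists>c. sub_coeffs n c \<and> c \<noteq> (\<lambda>_. 0) \<and> (\<forall>m\<in>expvecs n. sub_apply D12 c f m = 0) \<and>
        sub_bounds n c (729 * (rf + 1) ^ length [0::nat, 1] * (df + 1) ^ 2)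
          (1458 * n ^ 2 * (rf + 1) ^ length [0::nat, 1] * (df + 1) ^ 2)
          (160 * (rf + 1) ^ length [0::nat, 1] * (df + 1))"
        by (rule main_case[OF n su p1 _ _ _ p5 Dl12]) auto
      have l2: "length [0::nat, 1] = 2" by simp
      assume r: "\<And>c1. sub_coeffs n c1 \<Longrightarrow> c1 \<noteq> (\<lambda>_. 0) \<Longrightarrow> \<forall>m\<in>expvecs n. sub_apply D12 c1 f m = 0 \<Longrightarrow>
        sub_bounds n c1 (729 * ?R ^ 2 * ?Dd ^ 2) (1458 * n ^ 2 * ?R ^ 2 * ?Dd ^ 2) (160 * ?R ^ 2 * ?Dd) \<Longrightarrow> thesis"
      show thesis using mc[unfolded l2] r by blast
    qed
    have b1: "sub_bounds n c1 (C * ?Dd^2 * ?R^2) (C * ?Dd^9 * ?R^8) (C * ?Dd^2 * ?R^2)"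
    proof (rule sub_bounds_mono[OF c1(4)])
      show "729 * ?R ^ 2 * ?Dd ^ 2 \<le> C * ?Dd ^ 2 * ?R ^ 2" using C1 by simp
      have "?R ^ 2 \<le> ?R ^ 8" "?Dd ^ 2 \<le> ?Dd ^ 9" by (intro pow_mono_ge1; simp)+
      then have pm: "?R ^ 2 * ?Dd ^ 2 \<le> ?R ^ 8 * ?Dd ^ 9" by (rule mult_le_mono)
      show "1458 * n ^ 2 * ?R ^ 2 * ?Dd ^ 2 \<le> C * ?Dd ^ 9 * ?R ^ 8"
        using mult_le_mono[OF C1(2) pm] by (simp add: ac_simps)
      have "?Dd \<le> ?Dd ^ 2" by (simp add: power2_eq_square)
      then have "(160 * ?R ^ 2) * ?Dd \<le> (C * ?R ^ 2) * ?Dd ^ 2"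
        using C1(3) by (intro mult_le_mono) auto
      then show "160 * ?R ^ 2 * ?Dd \<le> C * ?Dd ^ 2 * ?R ^ 2" by (simp add: ac_simps)
    qed
    have part2: "\<exists>c. sub_coeffs n c \<and> c \<noteq> (\<lambda>_. 0) \<and>
          (\<forall>m\<in>expvecs n. sub_apply (dvar h) c f m = 0) \<and>
          sub_bounds n c (C * ?Dd^2 * ?R^3) (C * ?Dd^9 * ?R^12) (C * ?Dd^2 * ?R^3)"
      if h: "h \<in> {2..<n}" for h
    proof -
      have Dlh: "(dvar h ^^ l) f \<in> Sp n f (AJ n 0) (GH n [0, 1, h] (2 * l))" for l
      proof -
        define \<delta> where "\<delta> = (\<lambda>_. 0::nat)(h := l)"
        have "mdeg n \<delta> = (\<Sum>v<n. (if v = h then l else 0))" unfolding mdeg_def \<delta>_def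
          by (intro sum.cong) auto
        also have "\<dots> = l" using h by (simp add: sum.delta)
        finally have md: "mdeg n \<delta> = l" .
        have "\<delta> \<in> GH n [0, 1, h] (2 * l)"
          using h md by (auto simp: GH_def SuppH_def expvecs_def \<delta>_def)
        then show ?thesis using funpow_dvar_pder[of h n l f] h pder_in_Sp by (simp add: \<delta>_def)
      qed
      obtain c where c: "sub_coeffs n c" "c \<noteq> (\<lambda>_. 0)" "\<forall>m\<in>expvecs n. sub_apply (dvar h) c f m = 0"
        "sub_bounds n c (729 * ?R ^ 3 * ?Dd ^ 2) (1458 * n ^ 2 * ?R ^ 3 * ?Dd ^ 2) (160 * ?R ^ 3 * ?Dd)"
      proof -
        have p1: "set [0::nat, 1, h] \<subseteq> {..<n}" using n h by auto
        have p5: "\<And>i. i \<in> set [0::nat, 1, h] \<Longrightarrow> op_order (L i) \<le> rf" using n h ordb by auto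
        have mc: "\<exists>c. sub_coeffs n c \<and> c \<noteq> (\<lambda>_. 0) \<and> (\<forall>m\<in>expvecs n. sub_apply (dvar h) c f m = 0) \<and>
          sub_bounds n c (729 * (rf + 1) ^ length [0::nat, 1, h] * (df + 1) ^ 2)
            (1458 * n ^ 2 * (rf + 1) ^ length [0::nat, 1, h] * (df + 1) ^ 2)
            (160 * (rf + 1) ^ length [0::nat, 1, h] * (df + 1))"
          by (rule main_case[OF n su p1 _ _ _ p5 Dlh]) auto
        have l3: "length [0::nat, 1, h] = 3" by simp
        assume r: "\<And>c. sub_coeffs n c \<Longrightarrow> c \<noteq> (\<lambda>_. 0) \<Longrightarrow> \<forall>m\<in>expvecs n. sub_apply (dvar h) c f m = 0 \<Longrightarrow>
          sub_bounds n c (729 * ?R ^ 3 * ?Dd ^ 2) (1458 * n ^ 2 * ?R ^ 3 * ?Dd ^ 2) (160 * ?R ^ 3 * ?Dd) \<Longrightarrow> thesis"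
        show thesis using mc[unfolded l3] r by blast
      qed
      have "sub_bounds n c (C * ?Dd^2 * ?R^3) (C * ?Dd^9 * ?R^12) (C * ?Dd^2 * ?R^3)"
      proof (rule sub_bounds_mono[OF c(4)])
        show "729 * ?R ^ 3 * ?Dd ^ 2 \<le> C * ?Dd ^ 2 * ?R ^ 3" using C1 by simp
        have "?R ^ 3 \<le> ?R ^ 12" "?Dd ^ 2 \<le> ?Dd ^ 9" by (intro pow_mono_ge1; simp)+
        then have pm: "?R ^ 3 * ?Dd ^ 2 \<le> ?R ^ 12 * ?Dd ^ 9" by (rule mult_le_mono)
        show "1458 * n ^ 2 * ?R ^ 3 * ?Dd ^ 2 \<le> C * ?Dd ^ 9 * ?R ^ 12"
          using mult_le_mono[OF C1(2) pm] by (simp add: ac_simps)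
        have "?Dd \<le> ?Dd ^ 2" by (simp add: power2_eq_square)
        then have "(160 * ?R ^ 3) * ?Dd \<le> (C * ?R ^ 3) * ?Dd ^ 2"
          using C1(3) by (intro mult_le_mono) auto
        then show "160 * ?R ^ 3 * ?Dd \<le> C * ?Dd ^ 2 * ?R ^ 3" by (simp add: ac_simps)
      qed
      then show ?thesis using c by blast
    qed
    show "let rf = Max ((\<lambda>i. op_order (L i)) ` {..<n});
         df = Max ((\<lambda>i. op_degree n (L i)) ` {..<n})
     in
     (\<exists>c. sub_coeffs n c \<and> c \<noteq> (\<lambda>_. 0) \<and>
          (\<forall>m\<in>expvecs n. sub_apply D12 c f m = 0) \<and>
          sub_bounds n c (C * (df + 1)^2 * (rf + 1)^2) (C * (df + 1)^9 * (rf + 1)^8)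
                         (C * (df + 1)^2 * (rf + 1)^2)) \<and>
     (\<forall>h\<in>{2..<n}. \<exists>c. sub_coeffs n c \<and> c \<noteq> (\<lambda>_. 0) \<and>
          (\<forall>m\<in>expvecs n. sub_apply (dvar h) c f m = 0) \<and>
          sub_bounds n c (C * (df + 1)^2 * (rf + 1)^3) (C * (df + 1)^9 * (rf + 1)^12)
                         (C * (df + 1)^2 * (rf + 1)^3))"
      unfolding Let_def rf_def[symmetric] df_def[symmetric]
      using c1(1-3) b1 part2 by blast
  qed
qed

end
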